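(* Let $B\in\mathbb{Z}^{n\times m}$, $C\in\mathbb{Z}^{m\times n}$ and the box $\mathcal{D}$ be as in the context, and suppose now that $J_2=\mathrm{diag}(a_1,\dots,a_n)$ and $J_4=\mathrm{diag}(b_1,\dots,b_n)$ are uncertain diagonal matrices with $a_i\in[a_i^-,a_i^+]$, $b_i\in[b_i^-,b_i^+]$ (finite intervals); let $\mathcal{J}$ denote the set of admissible pairs $(J_2,J_4)$. Assume (A1) holds and (A2) holds for every $(J_2,J_4)\in\mathcal{J}$. Define $\Psi^-(\kappa)=\min_{\Delta\in\mathcal{D},(J_2,J_4)\in\mathcal{J}}\det[-(B\Delta C+\kappa^2J_2+\kappa^4J_4)]$ and $\Psi^+(\kappa)=\max_{\Delta\in\mathcal{D},(J_2,J_4)\in\mathcal{J}}\det[-(B\Delta C+\kappa^2J_2+\kappa^4J_4)]$. Then: (i) if the system exhibits microphase separation for some $(\Delta,J_2,J_4)\in\mathcal{D}\times\mathcal{J}$, then $\Psi^+$ is initially positive; (ii) if either $\Psi^-$ or $\Psi^+$ is initially positive and has a negative sign change, then the system exhibits microphase separation for some $(\Delta,J_2,J_4)\in\mathcal{D}\times\mathcal{J}$; (iii) if $\Psi^-$ is initially positive and $\Psi^+$ has a negative sign change, then the system exhibits microphase separation for every $(\Delta,J_2,J_4)\in\mathcal{D}\times\mathcal{J}$; (iv) for each $\kappa\ge0$, $\Psi^-(\kappa)$ and $\Psi^+(\kappa)$ equal respectively the minimum and maximum of $\det[-(B\Delta C+\kappa^2J_2+\kappa^4J_4)]$ over the finitely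 many vertices of the box $\mathcal{D}\times\mathcal{J}$ (all $\Delta_j\in\{\Delta_j^-,\Delta_j^+\}$, $a_i\in\{a_i^-,a_i^+\}$, $b_i\in\{b_i^-,b_i^+\}$).
   Context: Let $n,m\ge 1$. Given bounds $0\le \Delta_j^-\le \Delta_j^+<\infty$ ($j=1,\dots,m$), $\mathcal{D}$ is the set of diagonal matrices $\Delta=\mathrm{diag}(\Delta_1,\dots,\Delta_m)$ with $\Delta_j^-\le\Delta_j\le\Delta_j^+$. Assumption (A1): for every $\Delta\in\mathcal{D}$, $B\Delta C$ is singular and has $n-1$ eigenvalues (with multiplicity) with negative real part, and there is a nonzero $v\ge0$ with $v^\top B=0$. Assumption (A2) for a pair $(J_2,J_4)$ of symmetric matrices: $J_2$ is indefinite, $J_4$ is negative semidefinite, and there exists $\bar\kappa$ with $\bar\kappa^2J_2+\bar\kappa^4J_4$ negative definite. For real $\kappa\ge0$ let $\rho(\Delta,J_2,J_4,\kappa)$ be the spectral abscissa (maximum real part of eigenvalues) of $B\Delta C+\kappa^2J_2+\kappa^4J_4$. A continuous function $f$ on $[0,\infty)$ is initially positive if there is $\hat\kappa>0$ with $f>0$ on $(0,\hat\kappa)$; it has a negative sign change if $f(\kappa_1)>0>f(\kappa_2)$ for some $\kappa_1<\kappa_2$. The system exhibits microphase separation for $(\Delta,J_2,J_4)$ if there is $\hat\kappa>0$ with $\rho(\Delta,J_2,J_4,\kappa)<0$ for all $\kappa\in(0,\hat\kappa)$ and there are $\hat\kappa<\kappa_1<\kappa_2$ with $\rho(\Delta,J_2,J_4,\kappa_1)>0$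 and $\rho(\Delta,J_2,J_4,\kappa_2)<0$. *)

theory Defs
  imports Complex_Main "Jordan_Normal_Form.Jordan_Normal_Form"
begin

definition sysmat :: "int mat \<Rightarrow> int mat \<Rightarrow> real mat \<Rightarrow> real mat \<Rightarrow> real mat \<Rightarrow> real \<Rightarrow> real mat" where
  "sysmat B C \<Delta> J2 J4 \<kappa> =
     map_mat real_of_int B * \<Delta> * map_mat real_of_int C + (\<kappa>^2) \<cdot>\<^sub>m J2 + (\<kappa>^4) \<cdot>\<^sub>m J4"

definition ceig :: "real mat \<Rightarrow> complex \<Rightarrow> bool" where
  "ceig A z = eigenvalue (map_mat complex_of_real A) z"

definition alg_mult :: "real mat \<Rightarrow> complex \<Rightarrow> nat" where
  "alg_mult A z = order z (char_poly (map_mat complex_of_real A))"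

definition spectral_abscissa :: "real mat \<Rightarrow> real" where
  "spectral_abscissa A = Max {Re z | z. ceig A z}"

definition rho :: "int mat \<Rightarrow> int mat \<Rightarrow> real mat \<Rightarrow> real mat \<Rightarrow> real mat \<Rightarrow> real \<Rightarrow> real" where
  "rho B C \<Delta> J2 J4 \<kappa> = spectral_abscissa (sysmat B C \<Delta> J2 J4 \<kappa>)"

definition boxD :: "nat \<Rightarrow> (nat \<Rightarrow> real) \<Rightarrow> (nat \<Rightarrow> real) \<Rightarrow> real mat set" where
  "boxD m Dlo Dhi = {mat_diag m d | d. \<forall>j<m. Dlo j \<le> d j \<and> d j \<le> Dhi j}"

definition vertD :: "nat \<Rightarrow> (nat \<Rightarrow> real) \<Rightarrow> (nat \<Rightarrow> real) \<Rightarrow> real mat set" where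
  "vertD m Dlo Dhi = {mat_diag m d | d. \<forall>j<m. d j \<in> {Dlo j, Dhi j}}"

definition boxJ :: "nat \<Rightarrow> (nat \<Rightarrow> real) \<Rightarrow> (nat \<Rightarrow> real) \<Rightarrow> (nat \<Rightarrow> real) \<Rightarrow> (nat \<Rightarrow> real)
    \<Rightarrow> (real mat \<times> real mat) set" where
  "boxJ n alo ahi blo bhi = {(mat_diag n a, mat_diag n b) | a b.
      \<forall>i<n. alo i \<le> a i \<and> a i \<le> ahi i \<and> blo i \<le> b i \<and> b i \<le> bhi i}"

definition vertJ :: "nat \<Rightarrow> (nat \<Rightarrow> real) \<Rightarrow> (nat \<Rightarrow> real) \<Rightarrow> (nat \<Rightarrow> real) \<Rightarrow> (nat \<Rightarrow> real)
    \<Rightarrow> (real mat \<times> real mat) set" where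
  "vertJ n alo ahi blo bhi = {(mat_diag n a, mat_diag n b) | a b.
      \<forall>i<n. a i \<in> {alo i, ahi i} \<and> b i \<in> {blo i, bhi i}}"

definition A1 :: "nat \<Rightarrow> nat \<Rightarrow> int mat \<Rightarrow> int mat \<Rightarrow> real mat set \<Rightarrow> bool" where
  "A1 n m B C Ds \<longleftrightarrow>
     (\<forall>\<Delta>\<in>Ds. let A = map_mat real_of_int B * \<Delta> * map_mat real_of_int C in
        det A = 0 \<and> (\<Sum>z\<in>{z. ceig A z \<and> Re z < 0}. alg_mult A z) = n - 1) \<and>
     (\<exists>v\<in>carrier_vec n. v \<noteq> 0\<^sub>v n \<and> (\<forall>i<n. v $ i \<ge> 0) \<and>
        transpose_mat (map_mat real_of_int B) *\<^sub>v v = 0\<^sub>v m)"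

definition qform :: "real mat \<Rightarrow> real vec \<Rightarrow> real" where
  "qform A x = x \<bullet> (A *\<^sub>v x)"

definition indefinite :: "nat \<Rightarrow> real mat \<Rightarrow> bool" where
  "indefinite n A \<longleftrightarrow> (\<exists>x\<in>carrier_vec n. qform A x > 0) \<and> (\<exists>y\<in>carrier_vec n. qform A y < 0)"

definition neg_semidef :: "nat \<Rightarrow> real mat \<Rightarrow> bool" where
  "neg_semidef n A \<longleftrightarrow> (\<forall>x\<in>carrier_vec n. qform A x \<le> 0)"

definition neg_def :: "nat \<Rightarrow> real mat \<Rightarrow> bool" where
  "neg_def n A \<longleftrightarrow> (\<forall>x\<in>carrier_vec n. x \<noteq> 0\<^sub>v n \<longrightarrow> qform A x < 0)"

definition A2 :: "nat \<Rightarrow> real mat \<Rightarrow> real mat \<Rightarrow> bool" where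
  "A2 n J2 J4 \<longleftrightarrow> J2 \<in> carrier_mat n n \<and> J4 \<in> carrier_mat n n \<and>
     transpose_mat J2 = J2 \<and> transpose_mat J4 = J4 \<and>
     indefinite n J2 \<and> neg_semidef n J4 \<and>
     (\<exists>k. neg_def n (k^2 \<cdot>\<^sub>m J2 + k^4 \<cdot>\<^sub>m J4))"

definition initially_positive :: "(real \<Rightarrow> real) \<Rightarrow> bool" where
  "initially_positive f \<longleftrightarrow> (\<exists>k>0. \<forall>\<kappa>. 0 < \<kappa> \<and> \<kappa> < k \<longrightarrow> f \<kappa> > 0)"

definition neg_sign_change :: "(real \<Rightarrow> real) \<Rightarrow> bool" where
  "neg_sign_change f \<longleftrightarrow> (\<exists>k1 k2. 0 \<le> k1 \<and> k1 < k2 \<and> f k1 > 0 \<and> f k2 < 0)"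

definition microphase :: "int mat \<Rightarrow> int mat \<Rightarrow> real mat \<Rightarrow> real mat \<Rightarrow> real mat \<Rightarrow> bool" where
  "microphase B C \<Delta> J2 J4 \<longleftrightarrow>
     (\<exists>kh>0. (\<forall>\<kappa>. 0 < \<kappa> \<and> \<kappa> < kh \<longrightarrow> rho B C \<Delta> J2 J4 \<kappa> < 0) \<and>
        (\<exists>k1 k2. kh < k1 \<and> k1 < k2 \<and> rho B C \<Delta> J2 J4 k1 > 0 \<and> rho B C \<Delta> J2 J4 k2 < 0))"

definition detvals :: "int mat \<Rightarrow> int mat \<Rightarrow> real mat set \<Rightarrow> (real mat \<times> real mat) set \<Rightarrow> real \<Rightarrow> real set" where
  "detvals B C Ds Js \<kappa> = {det (- sysmat B C \<Delta> J2 J4 \<kappa>) | \<Delta> J2 J4. \<Delta> \<in> Ds \<and> (J2, J4) \<in> Js}"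

definition Psi_minus :: "int mat \<Rightarrow> int mat \<Rightarrow> real mat set \<Rightarrow> (real mat \<times> real mat) set \<Rightarrow> real \<Rightarrow> real" where
  "Psi_minus B C Ds Js \<kappa> = Inf (detvals B C Ds Js \<kappa>)"

definition Psi_plus :: "int mat \<Rightarrow> int mat \<Rightarrow> real mat set \<Rightarrow> (real mat \<times> real mat) set \<Rightarrow> real \<Rightarrow> real" where
  "Psi_plus B C Ds Js \<kappa> = Sup (detvals B C Ds Js \<kappa>)"

end

theory Submission
  imports Defs
begin

definition cpc :: "real mat \<Rightarrow> complex poly" where
  "cpc X = char_poly (map_mat complex_of_real X)"

lemma cpc_real: assumes "X \<in> carrier_mat n n"
  shows "cpc X = map_poly complex_of_real (char_poly X)"
  unfolding cpc_def using of_real_hom.char_poly_hom[OF assms] .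

lemma poly_cpc_real: assumes "X \<in> carrier_mat n n"
  shows "poly (cpc X) (complex_of_real x) = complex_of_real (poly (char_poly X) x)"
  unfolding cpc_real[OF assms] by (rule of_real_hom.poly_map_poly)

lemma ceig_iff: assumes "X \<in> carrier_mat n n"
  shows "ceig X z \<longleftrightarrow> poly (cpc X) z = 0"
  unfolding ceig_def cpc_def
  by (rule eigenvalue_root_char_poly[of _ n]) (use assms in simp)

lemma char_poly_at0: fixes X :: "real mat" assumes "X \<in> carrier_mat n n"
  shows "poly (char_poly X) 0 = det (-X)"
proof -
  have "char_matrix X 0 = X" unfolding char_matrix_def using assms
    by (intro eq_matI) auto
  thus ?thesis using char_poly_matrix[OF assms, of 0] by simp
qed

lemma cpc_monic: assumes "X \<in> carrier_mat n n"
  shows "degree (cpc X) = n \<and> coeff (cpc X) n = 1"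
  unfolding cpc_def by (rule degree_monic_char_poly) (use assms in simp)

lemma cpc_nz: assumes "X \<in> carrier_mat n n" shows "cpc X \<noteq> 0"
  using cpc_monic[OF assms] by auto

lemma cp_monic: assumes "X \<in> carrier_mat n n"
  shows "degree (char_poly X) = n \<and> coeff (char_poly X) n = 1"
  by (rule degree_monic_char_poly[OF assms])

lemma order_prod_lin:
  "order z (\<Prod>a\<leftarrow>as. [:- a, 1:]) = count_list as (z::complex)"
proof (induct as)
  case Nil thus ?case by simp
next
  case (Cons a as)
  have nz: "(\<Prod>a\<leftarrow>as. [:- a, 1:]) \<noteq> (0::complex poly)"
    by (simp only: prod_list_zero_iff set_map image_iff) (metis pCons_eq_0_iff one_neq_zero)
  have "order z (\<Prod>a\<leftarrow>a#as. [:- a, 1:]) = order z ([:- a, 1:] * (\<Prod>a\<leftarrow>as. [:- a, 1:]))" by simp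
  also have "\<dots> = order z [:- a, 1:] + order z (\<Prod>a\<leftarrow>as. [:- a, 1:])"
    by (rule order_mult) (metis nz mult_eq_0_iff pCons_eq_0_iff one_neq_zero)
  also have "\<dots> = count_list (a#as) z" using Cons by (auto simp: order_linear')
  finally show ?case .
qed

lemma cpc_factor: assumes X: "X \<in> carrier_mat n n"
  shows "\<exists>r. (\<forall>z. poly (cpc X) z = (\<Prod>i<n. z - r i)) \<and>
             (\<forall>z. order z (cpc X) = card {i. i < n \<and> r i = z})"
proof -
  have Xc: "map_mat complex_of_real X \<in> carrier_mat n n" using X by simp
  from char_poly_factorized[OF Xc] obtain as where
    as: "cpc X = (\<Prod>a\<leftarrow>as. [:- a, 1:])" "length as = n" unfolding cpc_def by blast
  show ?thesis
  proof (intro exI[of _ "(!) as"] conjI allI)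
    fix z
    have "poly (cpc X) z = prod_list (map (\<lambda>a. z - a) as)"
      unfolding as(1) poly_prod_list by (simp add: o_def)
    also have "\<dots> = (\<Prod>i<n. z - as ! i)"
      unfolding prod.list_conv_set_nth using as(2) by (simp add: lessThan_atLeast0)
    finally show "poly (cpc X) z = (\<Prod>i<n. z - as ! i)" .
  next
    fix z
    have "order z (cpc X) = count_list as z" unfolding as(1) order_prod_lin ..
    also have "\<dots> = card {i. i < n \<and> as ! i = z}"
      unfolding count_list_eq_length_filter length_filter_conv_card as(2)
      by (metis (no_types, lifting))
    finally show "order z (cpc X) = card {i. i < n \<and> as ! i = z}" .
  qed
qed

lemma poly_pos_large: fixes f :: "real poly"
  assumes "coeff f (degree f) = 1"
  shows "\<exists>x0. \<forall>x\<ge>x0. poly f x > 0"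
proof (cases "degree f")
  case 0
  then have "poly f x = 1" for x using assms by (simp add: poly_altdef)
  thus ?thesis by auto
next
  case (Suc d)
  define S where "S = (\<Sum>i<Suc d. \<bar>coeff f i\<bar>)"
  have S0: "S \<ge> 0" unfolding S_def by (intro sum_nonneg) auto
  show ?thesis
  proof (intro exI[of _ "S+1"] allI impI)
    fix x :: real assume x: "x \<ge> S + 1"
    hence x1: "x \<ge> 1" using S0 by simp
    have "poly f x = (\<Sum>i\<le>Suc d. coeff f i * x ^ i)" unfolding poly_altdef Suc ..
    also have "\<dots> = (\<Sum>i<Suc d. coeff f i * x ^ i) + x ^ Suc d"
      using assms Suc by (simp add: lessThan_Suc_atMost[symmetric])
    finally have eq: "poly f x = (\<Sum>i<Suc d. coeff f i * x ^ i) + x ^ Suc d" .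
    have "\<bar>\<Sum>i<Suc d. coeff f i * x ^ i\<bar> \<le> (\<Sum>i<Suc d. \<bar>coeff f i\<bar> * x ^ d)"
    proof -
      have "\<bar>\<Sum>i<Suc d. coeff f i * x ^ i\<bar> \<le> (\<Sum>i<Suc d. \<bar>coeff f i * x ^ i\<bar>)"
        by (rule sum_abs)
      also have "\<dots> \<le> (\<Sum>i<Suc d. \<bar>coeff f i\<bar> * x ^ d)"
      proof (rule sum_mono)
        fix i assume "i \<in> {..<Suc d}"
        hence "x ^ i \<le> x ^ d" using x1 by (intro power_increasing) auto
        thus "\<bar>coeff f i * x ^ i\<bar> \<le> \<bar>coeff f i\<bar> * x ^ d" using x1
          by (simp add: abs_mult mult_left_mono)
      qed
      finally show ?thesis .
    qed
    also have "\<dots> = S * x ^ d" unfolding S_def sum_distrib_right ..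
    also have "\<dots> < x * x ^ d"
      using x x1 by (intro mult_strict_right_mono) auto
    finally have "\<bar>\<Sum>i<Suc d. coeff f i * x ^ i\<bar> < x ^ Suc d" by simp
    thus "poly f x > 0" unfolding eq by linarith
  qed
qed

lemma poly_pos_no_root: fixes f :: "real poly"
  assumes "coeff f (degree f) = 1" and "\<forall>x\<ge>a. poly f x \<noteq> 0"
  shows "poly f a > 0"
proof (rule ccontr)
  assume "\<not> poly f a > 0"
  hence neg: "poly f a < 0" using assms(2) by force
  obtain x0 where x0: "\<forall>x\<ge>x0. poly f x > 0" using poly_pos_large[OF assms(1)] by blast
  define b where "b = max x0 (a+1)"
  have "poly f b > 0" using x0 unfolding b_def by simp
  have "a < b" unfolding b_def by simp
  from poly_IVT_pos[OF this neg \<open>poly f b > 0\<close>] obtain x where "x > a" "x < b" "poly f x = 0"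
    by auto
  thus False using assms(2) by auto
qed

lemma det_neg_pos: assumes X: "X \<in> carrier_mat n n"
  and "\<forall>x\<ge>0. \<not> ceig X (complex_of_real x)"
  shows "det (-X) > 0"
proof -
  have "poly (char_poly X) 0 > 0"
  proof (rule poly_pos_no_root)
    show "coeff (char_poly X) (degree (char_poly X)) = 1" using cp_monic[OF X] by simp
    show "\<forall>x\<ge>0. poly (char_poly X) x \<noteq> 0"
      using assms(2) unfolding ceig_iff[OF X] poly_cpc_real[OF X] by auto
  qed
  thus ?thesis using char_poly_at0[OF X] by simp
qed

lemma ceig_finite: assumes X: "X \<in> carrier_mat n n" shows "finite {z. ceig X z}"
  unfolding ceig_iff[OF X] by (rule poly_roots_finite[OF cpc_nz[OF X]])

lemma ceig_ex: assumes X: "X \<in> carrier_mat n n" and n: "n \<ge> 1" shows "\<exists>z. ceig X z"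
proof -
  obtain r where r: "\<forall>z. poly (cpc X) z = (\<Prod>i<n. z - r i)" using cpc_factor[OF X] by blast
  have "poly (cpc X) (r 0) = 0" unfolding r[rule_format] using n
    by (intro prod_zero) (auto intro!: bexI[of _ 0])
  thus ?thesis unfolding ceig_iff[OF X] by blast
qed

lemma sa_set: "{Re z |z. ceig X z} = Re ` {z. ceig X z}" by auto

lemma sa_ge: assumes X: "X \<in> carrier_mat n n" and "ceig X z"
  shows "Re z \<le> spectral_abscissa X"
  unfolding spectral_abscissa_def sa_set
  by (rule Max_ge) (use assms ceig_finite[OF X] in auto)

lemma sa_attained: assumes X: "X \<in> carrier_mat n n" and n: "n \<ge> 1"
  shows "\<exists>z. ceig X z \<and> Re z = spectral_abscissa X"
proof -
  have "spectral_abscissa X \<in> Re ` {z. ceig X z}"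
    unfolding spectral_abscissa_def sa_set
    by (rule Max_in) (use ceig_ex[OF X n] ceig_finite[OF X] in auto)
  thus ?thesis by auto
qed

lemma sa_neg_iff: assumes X: "X \<in> carrier_mat n n" and n: "n \<ge> 1"
  shows "spectral_abscissa X < 0 \<longleftrightarrow> (\<forall>z. ceig X z \<longrightarrow> Re z < 0)"
  using sa_ge[OF X] sa_attained[OF X n] by force

lemma L1: assumes X: "X \<in> carrier_mat n n" and n: "n \<ge> 1" and d: "det (-X) < 0"
  shows "spectral_abscissa X > 0"
proof -
  have "\<not> (\<forall>x\<ge>0. \<not> ceig X (complex_of_real x))" using det_neg_pos[OF X] d by force
  then obtain x where x: "x \<ge> 0" "ceig X (complex_of_real x)" by blast
  have "x \<noteq> 0"
  proof
    assume "x = 0"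
    with x have "poly (char_poly X) 0 = 0" unfolding ceig_iff[OF X] poly_cpc_real[OF X] by simp
    thus False using char_poly_at0[OF X] d by simp
  qed
  with x have "x > 0" by simp
  with sa_ge[OF X x(2)] show ?thesis by simp
qed

lemma L2: assumes X: "X \<in> carrier_mat n n" and n: "n \<ge> 1" and s: "spectral_abscissa X < 0"
  shows "det (-X) > 0"
proof (rule det_neg_pos[OF X], intro allI impI notI)
  fix x :: real assume "x \<ge> 0" "ceig X (complex_of_real x)"
  thus False using s sa_ge[OF X] by force
qed

lemma gersh: fixes Y :: "complex mat"
  assumes Y: "Y \<in> carrier_mat n n" and ev: "eigenvalue Y z"
  shows "\<exists>i<n. cmod (z - Y$$(i,i)) \<le> (\<Sum>j\<in>{0..<n}-{i}. cmod (Y$$(i,j)))"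
proof -
  from ev obtain v where v: "v \<in> carrier_vec n" "v \<noteq> 0\<^sub>v n" "Y *\<^sub>v v = z \<cdot>\<^sub>v v"
    unfolding eigenvalue_def eigenvector_def using Y by auto
  have "\<exists>i<n. v $ i \<noteq> 0"
  proof (rule ccontr)
    assume "\<not> ?thesis"
    hence "v = 0\<^sub>v n" using v(1) by (intro eq_vecI) auto
    thus False using v(2) by simp
  qed
  then obtain i0 where i0: "i0 < n" by blast
  have fin: "finite {0..<n}" "{0..<n} \<noteq> {}" using i0 by auto
  define M where "M = Max ((\<lambda>j. cmod (v$j)) ` {0..<n})"
  have "M \<in> (\<lambda>j. cmod (v$j)) ` {0..<n}" unfolding M_def by (rule Max_in) (use fin in auto)
  then obtain i where i: "i < n" "cmod (v$i) = M" by auto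
  have ge: "\<And>j. j < n \<Longrightarrow> cmod (v$j) \<le> cmod (v$i)" unfolding i(2) M_def
    by (rule Max_ge) auto
  have vi: "v $ i \<noteq> 0"
  proof
    assume "v $ i = 0"
    hence "\<forall>j<n. v $ j = 0" using ge by fastforce
    hence "v = 0\<^sub>v n" using v(1) by (intro eq_vecI) auto
    thus False using v(2) by simp
  qed
  have "(Y *\<^sub>v v) $ i = (\<Sum>j\<in>{0..<n}. Y$$(i,j) * v$j)"
    using Y v(1) i(1) by (auto simp: scalar_prod_def)
  also have "\<dots> = Y$$(i,i) * v$i + (\<Sum>j\<in>{0..<n}-{i}. Y$$(i,j) * v$j)"
    using i(1) by (subst sum.remove[of _ i]) auto
  finally have "z * v$i = Y$$(i,i) * v$i + (\<Sum>j\<in>{0..<n}-{i}. Y$$(i,j) * v$j)"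
    using v(3) v(1) i(1) by simp
  hence eq: "(z - Y$$(i,i)) * v$i = (\<Sum>j\<in>{0..<n}-{i}. Y$$(i,j) * v$j)"
    by (simp add: algebra_simps)
  have "cmod (z - Y$$(i,i)) * cmod (v$i) = cmod (\<Sum>j\<in>{0..<n}-{i}. Y$$(i,j) * v$j)"
    using eq by (metis norm_mult)
  also have "\<dots> \<le> (\<Sum>j\<in>{0..<n}-{i}. cmod (Y$$(i,j)) * cmod (v$j))"
    by (rule order.trans[OF norm_sum]) (simp add: norm_mult)
  also have "\<dots> \<le> (\<Sum>j\<in>{0..<n}-{i}. cmod (Y$$(i,j)) * cmod (v$i))"
    by (rule sum_mono) (auto intro!: mult_left_mono ge)
  also have "\<dots> = (\<Sum>j\<in>{0..<n}-{i}. cmod (Y$$(i,j))) * cmod (v$i)"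
    by (simp add: sum_distrib_right)
  finally have "cmod (z - Y$$(i,i)) * cmod (v$i) \<le> (\<Sum>j\<in>{0..<n}-{i}. cmod (Y$$(i,j))) * cmod (v$i)" .
  hence "cmod (z - Y$$(i,i)) \<le> (\<Sum>j\<in>{0..<n}-{i}. cmod (Y$$(i,j)))"
    using vi by (simp add: mult_le_cancel_right)
  thus ?thesis using i(1) by blast
qed

lemma prod_diff_bound:
  fixes a b :: "nat \<Rightarrow> complex" and L e :: real
  assumes "finite I" "L \<ge> 1" "\<forall>i\<in>I. cmod (a i) \<le> L \<and> cmod (b i) \<le> L \<and> cmod (a i - b i) \<le> e"
  shows "cmod (prod a I - prod b I) \<le> card I * L ^ card I * e \<and> cmod (prod b I) \<le> L ^ card I"
  using assms
proof (induct I rule: finite_induct)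
  case empty thus ?case by simp
next
  case (insert x F)
  let ?A = "prod a F" and ?B = "prod b F"
  have IH: "cmod (?A - ?B) \<le> card F * L ^ card F * e" "cmod ?B \<le> L ^ card F"
    using insert by auto
  have ax: "cmod (a x) \<le> L" "cmod (b x) \<le> L" "cmod (a x - b x) \<le> e" using insert by auto
  have e0: "e \<ge> 0" using ax(3) norm_ge_zero order.trans by blast
  have Lp: "L ^ card F \<le> L ^ Suc (card F)" using insert(4) by (intro power_increasing) auto
  have eq: "prod a (insert x F) - prod b (insert x F) = a x * (?A - ?B) + (a x - b x) * ?B"
    using insert by (simp add: algebra_simps)
  have "cmod (a x * (?A - ?B) + (a x - b x) * ?B) \<le> cmod (a x) * cmod (?A - ?B) + cmod (a x - b x) * cmod ?B"
    by (metis norm_mult norm_triangle_ineq)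
  also have "\<dots> \<le> L * (card F * L ^ card F * e) + e * L ^ card F"
    by (intro add_mono mult_mono IH ax) (use e0 insert(4) in auto)
  also have "\<dots> \<le> L * (card F * L ^ card F * e) + e * L ^ Suc (card F)"
    using Lp e0 by (intro add_left_mono mult_left_mono) auto
  also have "\<dots> = (card F + 1) * L ^ Suc (card F) * e" by (simp add: algebra_simps)
  finally have 1: "cmod (prod a (insert x F) - prod b (insert x F)) \<le> card (insert x F) * L ^ card (insert x F) * e"
    using insert eq by simp
  have "cmod (prod b (insert x F)) = cmod (b x) * cmod ?B" using insert by (simp add: norm_mult)
  also have "\<dots> \<le> L * L ^ card F" by (intro mult_mono ax IH) (use insert(4) in auto)
  finally have 2: "cmod (prod b (insert x F)) \<le> L ^ card (insert x F)" using insert by simp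
  from 1 2 show ?case ..
qed

lemma det_lip:
  fixes P Q :: "complex mat" and L e :: real
  assumes P: "P \<in> carrier_mat n n" and Q: "Q \<in> carrier_mat n n" and L: "L \<ge> 1"
    and b: "\<forall>i<n. \<forall>j<n. cmod (P$$(i,j)) \<le> L \<and> cmod (Q$$(i,j)) \<le> L \<and> cmod (P$$(i,j) - Q$$(i,j)) \<le> e"
  shows "cmod (det P - det Q) \<le> fact n * (n * L ^ n * e)"
proof -
  let ?S = "{p. p permutes {0..<n}}"
  have eq: "det P - det Q = (\<Sum>p\<in>?S. signof p * ((\<Prod>i=0..<n. P$$(i,p i)) - (\<Prod>i=0..<n. Q$$(i,p i))))"
    unfolding det_def'[OF P] det_def'[OF Q] sum_subtractf[symmetric] right_diff_distrib ..
  have "cmod (det P - det Q) \<le> (\<Sum>p\<in>?S. cmod (signof p * ((\<Prod>i=0..<n. P$$(i,p i)) - (\<Prod>i=0..<n. Q$$(i,p i)))))"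
    unfolding eq by (rule norm_sum)
  also have "\<dots> \<le> (\<Sum>p\<in>?S. n * L ^ n * e)"
  proof (rule sum_mono)
    fix p assume p: "p \<in> ?S"
    have "cmod (signof p :: complex) = 1" by (simp add: sign_def)
    hence "cmod (signof p * ((\<Prod>i=0..<n. P$$(i,p i)) - (\<Prod>i=0..<n. Q$$(i,p i))))
        = cmod ((\<Prod>i=0..<n. P$$(i,p i)) - (\<Prod>i=0..<n. Q$$(i,p i)))" by (simp add: norm_mult)
    also have "\<dots> \<le> card {0..<n} * L ^ card {0..<n} * e"
    proof -
      have "\<forall>i\<in>{0..<n}. cmod (P$$(i,p i)) \<le> L \<and> cmod (Q$$(i,p i)) \<le> L \<and> cmod (P$$(i,p i) - Q$$(i,p i)) \<le> e"
      proof
        fix i assume i: "i \<in> {0..<n}"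
        hence "p i \<in> {0..<n}" using p permutes_in_image[of p "{0..<n}"] by simp
        hence "p i < n" by simp
        moreover have "i < n" using i by simp
        ultimately show "cmod (P$$(i,p i)) \<le> L \<and> cmod (Q$$(i,p i)) \<le> L \<and> cmod (P$$(i,p i) - Q$$(i,p i)) \<le> e"
          using b by blast
      qed
      from prod_diff_bound[OF _ L this] show ?thesis by blast
    qed
    finally show "cmod (signof p * ((\<Prod>i=0..<n. P$$(i,p i)) - (\<Prod>i=0..<n. Q$$(i,p i)))) \<le> n * L ^ n * e"
      by simp
  qed
  also have "\<dots> = fact n * (n * L ^ n * e)"
    using card_permutations[of "{0..<n}" n] by simp
  finally show ?thesis .
qed

lemma det_row_affine:
  fixes P Q :: "real mat"
  assumes P: "P \<in> carrier_mat n n" and Q: "Q \<in> carrier_mat n n" and p: "p < n"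
    and same: "\<And>i k. i < n \<Longrightarrow> k < n \<Longrightarrow> i \<noteq> p \<Longrightarrow> Q$$(i,k) = P$$(i,k)"
  shows "det (mat n n (\<lambda>(i,k). (1-t) * P$$(i,k) + t * Q$$(i,k))) = (1-t) * det P + t * det Q"
proof -
  let ?R = "mat n n (\<lambda>(i,k). (1-t) * P$$(i,k) + t * Q$$(i,k))"
  have R: "?R \<in> carrier_mat n n" by simp
  have md: "mat_delete ?R p k = mat_delete P p k" "mat_delete Q p k = mat_delete P p k" for k
    unfolding mat_delete_def using P Q p same
    by (auto intro!: eq_matI simp: algebra_simps)
  have "det ?R = (\<Sum>k<n. ?R $$ (p,k) * cofactor ?R p k)" by (rule laplace_expansion_row[OF R p])
  also have "\<dots> = (\<Sum>k<n. ((1-t) * P$$(p,k) + t * Q$$(p,k)) * cofactor P p k)"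
    using p by (intro sum.cong) (auto simp: cofactor_def md)
  also have "\<dots> = (1-t) * (\<Sum>k<n. P$$(p,k) * cofactor P p k) + t * (\<Sum>k<n. Q$$(p,k) * cofactor Q p k)"
    using md(2) by (simp add: cofactor_def sum_distrib_left sum.distrib[symmetric] algebra_simps)
  also have "\<dots> = (1-t) * det P + t * det Q"
    using laplace_expansion_row[OF P p] laplace_expansion_row[OF Q p] by simp
  finally show ?thesis .
qed

lemma det_rank1_affine:
  fixes P Q :: "real mat"
  assumes P: "P \<in> carrier_mat n n" and Q: "Q \<in> carrier_mat n n"
    and diff: "\<And>i k. i < n \<Longrightarrow> k < n \<Longrightarrow> Q$$(i,k) = P$$(i,k) + u i * v k"
  shows "det (mat n n (\<lambda>(i,k). (1-t) * P$$(i,k) + t * Q$$(i,k))) = (1-t) * det P + t * det Q"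
proof (cases "\<forall>i<n. u i = 0")
  case True
  hence QP: "Q = P" using P Q diff by (intro eq_matI) auto
  have "mat n n (\<lambda>(i,k). (1-t) * P$$(i,k) + t * Q$$(i,k)) = P"
    using P unfolding QP by (intro eq_matI) (auto simp: algebra_simps)
  thus ?thesis unfolding QP by (simp add: algebra_simps)
next
  case False
  then obtain p where p: "p < n" "u p \<noteq> 0" by blast
  define c where "c i = (if i \<noteq> p then - (u i / u p) else 0)" for i
  define L where "L = mat n n (\<lambda>(i,k). (if i = k then 1 else 0) + (if k = p then c i else (0::real)))"
  have L: "L \<in> carrier_mat n n" unfolding L_def by simp
  have Lmul: "(\<Sum>l\<in>{0..<n}. L$$(i,l) * x l) = x i + c i * x p" if i: "i < n" for i x
  proof -
    have "(\<Sum>l\<in>{0..<n}. L$$(i,l) * x l) = (\<Sum>l\<in>{0..<n}. (if i = l then x l else 0) + (if l = p then c i * x l else 0))"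
      using i unfolding L_def by (intro sum.cong) (auto simp: algebra_simps)
    also have "\<dots> = x i + c i * x p" using i p by (simp add: sum.distrib)
    finally show ?thesis .
  qed
  have LZ: "(L * Z) $$ (i,k) = Z$$(i,k) + c i * Z$$(p,k)" if "Z \<in> carrier_mat n n" "i < n" "k < n" for Z i k
  proof -
    have "(L * Z) $$ (i,k) = (\<Sum>l\<in>{0..<n}. L$$(i,l) * Z$$(l,k))"
      using that L by (simp add: scalar_prod_def)
    thus ?thesis using Lmul[OF that(2), of "\<lambda>l. Z$$(l,k)"] by simp
  qed
  have detL: "det L = 1"
  proof -
    have "det L = (\<Sum>k<n. L $$ (p,k) * cofactor L p k)" by (rule laplace_expansion_row[OF L p(1)])
    also have "\<dots> = (\<Sum>k<n. (if k = p then cofactor L p k else 0))"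
      using p unfolding L_def c_def by (intro sum.cong) auto
    also have "\<dots> = cofactor L p p" using p by simp
    also have "mat_delete L p p = 1\<^sub>m (n-1)"
      unfolding mat_delete_def L_def c_def using p by (intro eq_matI) auto
    hence "cofactor L p p = 1" unfolding cofactor_def by simp
    finally show ?thesis .
  qed
  let ?R = "mat n n (\<lambda>(i,k). (1-t) * P$$(i,k) + t * Q$$(i,k))"
  have R: "?R \<in> carrier_mat n n" by simp
  have LR: "L * ?R = mat n n (\<lambda>(i,k). (1-t) * (L*P)$$(i,k) + t * (L*Q)$$(i,k))"
  proof (rule eq_matI)
    fix i k assume i: "i < dim_row (mat n n (\<lambda>(i,k). (1-t) * (L*P)$$(i,k) + t * (L*Q)$$(i,k)))"
      and k: "k < dim_col (mat n n (\<lambda>(i,k). (1-t) * (L*P)$$(i,k) + t * (L*Q)$$(i,k)))"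
    hence i: "i < n" and k: "k < n" by auto
    have "(L * ?R)$$(i,k) = ?R$$(i,k) + c i * ?R$$(p,k)" by (rule LZ[OF R i k])
    also have "\<dots> = (1-t)*(P$$(i,k) + c i*P$$(p,k)) + t*(Q$$(i,k)+c i*Q$$(p,k))"
      using i k p by (simp add: algebra_simps)
    also have "\<dots> = (1-t)*(L*P)$$(i,k) + t*(L*Q)$$(i,k)"
      by (simp only: LZ[OF P i k] LZ[OF Q i k])
    finally show "(L * ?R)$$(i,k) = mat n n (\<lambda>(i,k). (1-t) * (L*P)$$(i,k) + t * (L*Q)$$(i,k)) $$ (i,k)"
      using i k by simp
  qed (use L in auto)
  have same: "(L*Q)$$(i,k) = (L*P)$$(i,k)" if "i < n" "k < n" "i \<noteq> p" for i k
    using that LZ[OF P] LZ[OF Q] diff p unfolding c_def by (auto simp: field_simps)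
  have "det ?R = det (L * ?R)" using det_mult[OF L R] detL by simp
  also have "\<dots> = (1-t) * det (L*P) + t * det (L*Q)"
    unfolding LR by (rule det_row_affine[OF _ _ p(1)]) (use P Q L same in auto)
  also have "\<dots> = (1-t) * det P + t * det Q" using det_mult[OF L P] det_mult[OF L Q] detL by simp
  finally show ?thesis .
qed

lemma ofr_mult: "map_poly (of_real :: real \<Rightarrow> complex) (p * q) = map_poly of_real p * map_poly of_real q"
proof -
  interpret h: map_poly_comm_ring_hom "of_real :: real \<Rightarrow> complex" ..
  show ?thesis by (rule h.hom_mult)
qed

lemma eig_bound: fixes X :: "real mat"
  assumes X: "X \<in> carrier_mat n n" and K: "\<forall>i<n. \<forall>j<n. \<bar>X$$(i,j)\<bar> \<le> K" and z: "ceig X z"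
  shows "cmod z \<le> n * K"
proof -
  let ?Xc = "map_mat complex_of_real X"
  have Xc: "?Xc \<in> carrier_mat n n" using X by simp
  from gersh[OF Xc z[unfolded ceig_def]] obtain i where
    i: "i < n" "cmod (z - ?Xc$$(i,i)) \<le> (\<Sum>j\<in>{0..<n}-{i}. cmod (?Xc$$(i,j)))" by blast
  have "cmod z \<le> cmod (?Xc$$(i,i)) + cmod (z - ?Xc$$(i,i))" by (rule norm_triangle_sub)
  also have "\<dots> \<le> cmod (?Xc$$(i,i)) + (\<Sum>j\<in>{0..<n}-{i}. cmod (?Xc$$(i,j)))" using i by simp
  also have "\<dots> = (\<Sum>j\<in>{0..<n}. cmod (?Xc$$(i,j)))" using i by (simp add: sum.remove[of "{0..<n}" i])
  also have "\<dots> \<le> (\<Sum>j\<in>{0..<n}. K)" using i X K by (intro sum_mono) auto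
  also have "\<dots> = n * K" by simp
  finally show ?thesis .
qed

lemma cp_diff: fixes X Y :: "real mat" and K e Z :: real
  assumes X: "X \<in> carrier_mat n n" and Y: "Y \<in> carrier_mat n n" and K: "K \<ge> 0" and Z: "Z \<ge> 0"
    and b: "\<forall>i<n. \<forall>j<n. \<bar>X$$(i,j)\<bar> \<le> K \<and> \<bar>Y$$(i,j)\<bar> \<le> K \<and> \<bar>Y$$(i,j) - X$$(i,j)\<bar> \<le> e"
    and z: "cmod z \<le> Z"
  shows "cmod (poly (cpc Y) z - poly (cpc X) z) \<le> fact n * (n * (Z+K+1)^n * e)"
proof -
  let ?M = "\<lambda>A. - char_matrix (map_mat complex_of_real A) z"
  have pY: "poly (cpc Y) z = det (?M Y)" unfolding cpc_def by (rule char_poly_matrix) (use Y in simp)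
  have pX: "poly (cpc X) z = det (?M X)" unfolding cpc_def by (rule char_poly_matrix) (use X in simp)
  have ent: "?M A $$ (i,j) = (if i = j then z else 0) - complex_of_real (A$$(i,j))"
    if "A \<in> carrier_mat n n" "i<n" "j<n" for A i j
    using that by (simp add: char_matrix_def)
  have MY: "?M Y \<in> carrier_mat n n" using Y by (simp add: char_matrix_def)
  have MX: "?M X \<in> carrier_mat n n" using X by (simp add: char_matrix_def)
  have "cmod (det (?M Y) - det (?M X)) \<le> fact n * (n * (Z+K+1)^n * e)"
  proof (rule det_lip[OF MY MX])
    show "1 \<le> Z+K+1" using K Z by simp
    show "\<forall>i<n. \<forall>j<n. cmod (?M Y $$(i,j)) \<le> Z+K+1 \<and> cmod (?M X $$(i,j)) \<le> Z+K+1 \<and>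
          cmod (?M Y$$(i,j) - ?M X$$(i,j)) \<le> e"
    proof (intro allI impI conjI)
      fix i j assume ij: "i<n" "j<n"
      have a: "cmod ((if i = j then z else 0) - complex_of_real a) \<le> Z+K+1" if "\<bar>a\<bar> \<le> K" for a
      proof -
        have "cmod ((if i = j then z else 0) - complex_of_real a) \<le> cmod (if i = j then z else 0) + cmod (complex_of_real a)"
          by (rule norm_triangle_ineq4)
        also have "\<dots> \<le> Z + K" using that z Z by (intro add_mono) auto
        finally show ?thesis by simp
      qed
      show "cmod (?M Y $$(i,j)) \<le> Z+K+1" unfolding ent[OF Y ij] by (rule a) (use b ij in blast)
      show "cmod (?M X $$(i,j)) \<le> Z+K+1" unfolding ent[OF X ij] by (rule a) (use b ij in blast)
      have "?M Y$$(i,j) - ?M X$$(i,j) = complex_of_real (X$$(i,j) - Y$$(i,j))"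
        unfolding ent[OF Y ij] ent[OF X ij] by simp
      hence "cmod (?M Y$$(i,j) - ?M X$$(i,j)) = \<bar>Y$$(i,j) - X$$(i,j)\<bar>"
        by (simp only: norm_of_real abs_minus_commute)
      moreover have "\<bar>Y$$(i,j) - X$$(i,j)\<bar> \<le> e" using b ij by blast
      ultimately show "cmod (?M Y$$(i,j) - ?M X$$(i,j)) \<le> e" by simp
    qed
  qed
  thus ?thesis unfolding pY pX .
qed

lemma two_indices: assumes "card {i. i < n \<and> w i = x} \<ge> 2"
  shows "\<exists>a b. a < n \<and> b < n \<and> a \<noteq> b \<and> w a = x \<and> w b = x"
proof -
  have "Suc 1 \<le> card {i. i < n \<and> w i = x}" using assms by simp
  then obtain a B where aB: "{i. i < n \<and> w i = x} = insert a B" "a \<notin> B" "1 \<le> card B"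
    unfolding card_le_Suc_iff by blast
  then obtain b where "b \<in> B" by fastforce
  with aB show ?thesis by (metis (mono_tags, lifting) insertCI mem_Collect_eq)
qed

lemma one_index: assumes "card {i. i < n \<and> w i = x} \<ge> 1"
  shows "\<exists>a. a < n \<and> w a = x"
  using assms by (metis (mono_tags, lifting) Collect_empty_eq card.empty not_one_le_zero)

lemma prod_bound_two:
  fixes w :: "nat \<Rightarrow> complex" and t R :: real
  assumes ab: "a < n" "b < n" "a \<noteq> b" and wa: "cmod (w a) \<le> t" "cmod (w b) \<le> t"
    and wR: "\<forall>i<n. cmod (w i) \<le> R" and t: "t \<ge> 0"
  shows "cmod (\<Prod>i<n. complex_of_real t - w i) \<le> (2*t)^2 * (t+R)^(n-2)"
proof -
  let ?f = "\<lambda>i. complex_of_real t - w i"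
  have b1: "cmod (?f i) \<le> t + cmod (w i)" for i
    by (metis norm_of_real abs_of_nonneg t norm_triangle_ineq4)
  have "(\<Prod>i<n. ?f i) = ?f a * (\<Prod>i\<in>{..<n}-{a}. ?f i)"
    using ab by (subst prod.remove[of _ a]) auto
  also have "(\<Prod>i\<in>{..<n}-{a}. ?f i) = ?f b * (\<Prod>i\<in>{..<n}-{a}-{b}. ?f i)"
    using ab by (subst prod.remove[of _ b]) auto
  finally have eq: "(\<Prod>i<n. ?f i) = ?f a * (?f b * (\<Prod>i\<in>{..<n}-{a}-{b}. ?f i))" .
  have card: "card ({..<n}-{a}-{b}) = n - 2" using ab by (simp add: card_Diff_singleton_if)
  have "cmod (\<Prod>i\<in>{..<n}-{a}-{b}. ?f i) = (\<Prod>i\<in>{..<n}-{a}-{b}. cmod (?f i))"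
    by (simp add: prod_norm)
  also have "\<dots> \<le> (\<Prod>i\<in>{..<n}-{a}-{b}. t + R)"
  proof (rule prod_mono)
    fix i assume "i \<in> {..<n}-{a}-{b}"
    hence "cmod (w i) \<le> R" using wR by auto
    thus "0 \<le> cmod (?f i) \<and> cmod (?f i) \<le> t + R" using b1[of i] by simp
  qed
  also have "\<dots> = (t+R)^(n-2)" using card by simp
  finally have rest: "cmod (\<Prod>i\<in>{..<n}-{a}-{b}. ?f i) \<le> (t+R)^(n-2)" .
  have fa: "cmod (?f a) \<le> 2*t" "cmod (?f b) \<le> 2*t" using b1[of a] b1[of b] wa by auto
  have "cmod (\<Prod>i<n. ?f i) = cmod (?f a) * (cmod (?f b) * cmod (\<Prod>i\<in>{..<n}-{a}-{b}. ?f i))"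
    unfolding eq by (simp add: norm_mult)
  also have "\<dots> \<le> (2*t) * ((2*t) * (t+R)^(n-2))"
    by (intro mult_mono fa rest) (use t in auto)
  also have "\<dots> = (2*t)^2 * (t+R)^(n-2)" by (simp add: power2_eq_square)
  finally show ?thesis .
qed

lemma perturb:
  fixes X0 :: "real mat" and r :: "nat \<Rightarrow> complex"
  assumes X0: "X0 \<in> carrier_mat n n" and n: "n \<ge> 1"
    and r: "\<forall>z. poly (cpc X0) z = (\<Prod>i<n. z - r i)"
    and i0: "i0 < n" "r i0 = 0" and neg: "\<forall>i<n. i \<noteq> i0 \<longrightarrow> Re (r i) < 0"
  shows "\<exists>\<eta>>0. \<forall>Y \<in> carrier_mat n n. (\<forall>i<n. \<forall>j<n. \<bar>Y$$(i,j) - X0$$(i,j)\<bar> < \<eta>) \<and> det (-Y) > 0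
           \<longrightarrow> (\<forall>z. ceig Y z \<longrightarrow> Re z < 0)"
proof -
  define K where "K = (\<Sum>i<n. \<Sum>j<n. \<bar>X0$$(i,j)\<bar>) + 1"
  have K1: "K \<ge> 1" unfolding K_def by (simp add: sum_nonneg)
  have Kb: "\<bar>X0$$(i,j)\<bar> \<le> K - 1" if "i < n" "j < n" for i j
  proof -
    have "\<bar>X0$$(i,j)\<bar> \<le> (\<Sum>j<n. \<bar>X0$$(i,j)\<bar>)"
      by (rule member_le_sum) (use that in auto)
    also have "\<dots> \<le> (\<Sum>i<n. \<Sum>j<n. \<bar>X0$$(i,j)\<bar>)"
      by (rule member_le_sum[of i _ "\<lambda>i. \<Sum>j<n. \<bar>X0$$(i,j)\<bar>"]) (use that in \<open>auto intro: sum_nonneg\<close>)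
    finally show ?thesis unfolding K_def by simp
  qed
  define R where "R = real n * K"
  have R1: "R \<ge> 1" unfolding R_def using n K1 by (metis mult_mono' of_nat_1 of_nat_mono mult_1 zero_le_one)
  define S where "S = insert 1 ((\<lambda>i. - Re (r i)) ` {i. i < n \<and> i \<noteq> i0})"
  define \<gamma> where "\<gamma> = Min S"
  have Sfin: "finite S" unfolding S_def by simp
  have \<gamma>0: "\<gamma> > 0" unfolding \<gamma>_def
    using Sfin neg by (subst Min_gr_iff) (auto simp: S_def)
  have \<gamma>le: "\<gamma> \<le> - Re (r i)" if "i < n" "i \<noteq> i0" for i
    unfolding \<gamma>_def by (rule Min_le[OF Sfin]) (use that in \<open>auto simp: S_def\<close>)
  have \<gamma>1: "\<gamma> \<le> 1" unfolding \<gamma>_def by (rule Min_le[OF Sfin]) (auto simp: S_def)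
  define c where "c = (\<gamma>/2)^(n-1)"
  have c0: "c > 0" unfolding c_def using \<gamma>0 by simp
  define Cd where "Cd = fact n * (real n * ((R+1)+K+1)^n)"
  have Cd0: "Cd \<ge> 0" unfolding Cd_def using R1 K1 by simp
  define t where "t = min (\<gamma>/2) (c / (16 * (1+R)^(n-2)))"
  have t0: "t > 0" unfolding t_def using \<gamma>0 c0 R1 by simp
  have t\<gamma>: "t \<le> \<gamma>/2" unfolding t_def by simp
  have t1: "t \<le> 1" using t\<gamma> \<gamma>1 by simp
  have tc: "16 * t * (1+R)^(n-2) \<le> c"
  proof -
    have pos: "16 * (1+R)^(n-2) > 0" using R1 by simp
    have "t \<le> c / (16 * (1+R)^(n-2))" unfolding t_def by simp
    hence "t * (16 * (1+R)^(n-2)) \<le> c" using pos by (simp add: pos_le_divide_eq)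
    thus ?thesis by (simp add: algebra_simps)
  qed
  define \<eta> where "\<eta> = min 1 (min (t^n/(Cd+1)) (c*t/(2*(Cd+1))))"
  have \<eta>0: "\<eta> > 0" unfolding \<eta>_def using t0 c0 Cd0 by simp
  have \<eta>1: "\<eta> \<le> 1" unfolding \<eta>_def by simp
  have \<eta>a: "Cd * \<eta> < t^n"
  proof -
    have "\<eta> \<le> t^n/(Cd+1)" unfolding \<eta>_def by simp
    hence "Cd * \<eta> \<le> Cd * (t^n/(Cd+1))" using Cd0 by (rule mult_left_mono)
    also have "\<dots> < t^n" using Cd0 t0 by (simp add: field_simps)
    finally show ?thesis .
  qed
  have \<eta>b: "Cd * \<eta> < c*t/2"
  proof -
    have "\<eta> \<le> c*t/(2*(Cd+1))" unfolding \<eta>_def by simp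
    hence "Cd * \<eta> \<le> Cd * (c*t/(2*(Cd+1)))" using Cd0 by (rule mult_left_mono)
    also have "\<dots> < c*t/2" using Cd0 t0 c0 by (simp add: field_simps)
    finally show ?thesis .
  qed
  have rnorm: "cmod (r i) \<ge> \<gamma>" if "i < n" "i \<noteq> i0" for i
    using \<gamma>le[OF that] abs_Re_le_cmod[of "r i"] by linarith
  have p0_low: "cmod (poly (cpc X0) z) \<ge> cmod z * c" if z: "cmod z \<le> \<gamma>/2" for z
  proof -
    have "poly (cpc X0) z = (z - r i0) * (\<Prod>i\<in>{..<n}-{i0}. z - r i)"
      unfolding r[rule_format] using i0 by (subst prod.remove[of _ i0]) auto
    hence "cmod (poly (cpc X0) z) = cmod z * (\<Prod>i\<in>{..<n}-{i0}. cmod (z - r i))"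
      using i0 by (simp add: norm_mult prod_norm)
    moreover have "(\<Prod>i\<in>{..<n}-{i0}. cmod (z - r i)) \<ge> (\<Prod>i\<in>{..<n}-{i0}. \<gamma>/2)"
    proof (rule prod_mono)
      fix i assume "i \<in> {..<n}-{i0}"
      hence "cmod (r i) \<ge> \<gamma>" using rnorm by auto
      moreover have "cmod (r i) \<le> cmod (z - r i) + cmod z" by (metis norm_triangle_sub norm_minus_commute add.commute)
      ultimately show "0 \<le> \<gamma>/2 \<and> \<gamma>/2 \<le> cmod (z - r i)" using z \<gamma>0 by auto
    qed
    moreover have "(\<Prod>i\<in>{..<n}-{i0}. \<gamma>/2) = c" unfolding c_def using i0 by simp
    ultimately show ?thesis by (simp add: mult_left_mono)
  qed
  have p0_far: "cmod (poly (cpc X0) z) \<ge> t^n" if "\<forall>i<n. cmod (z - r i) \<ge> t" for z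
  proof -
    have "cmod (poly (cpc X0) z) = (\<Prod>i<n. cmod (z - r i))" unfolding r[rule_format] by (simp add: prod_norm)
    moreover have "(\<Prod>i<n. cmod (z - r i)) \<ge> (\<Prod>i<n. t)" by (rule prod_mono) (use that t0 in auto)
    ultimately show ?thesis by simp
  qed
  have f0t: "poly (char_poly X0) t \<ge> c * t"
  proof -
    have pos: "poly (char_poly X0) t > 0"
    proof (rule poly_pos_no_root)
      show "coeff (char_poly X0) (degree (char_poly X0)) = 1" using cp_monic[OF X0] by simp
      show "\<forall>x\<ge>t. poly (char_poly X0) x \<noteq> 0"
      proof (intro allI impI notI)
        fix x assume x: "x \<ge> t" "poly (char_poly X0) x = 0"
        hence "poly (cpc X0) (complex_of_real x) = 0" unfolding poly_cpc_real[OF X0] by simp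
        then obtain i where i: "i < n" "complex_of_real x = r i" unfolding r[rule_format] by auto
        show False
        proof (cases "i = i0")
          case True thus False using i i0 x t0 by simp
        next
          case False thus False using neg i x t0 by (metis Re_complex_of_real less_le_trans not_less_iff_gr_or_eq)
        qed
      qed
    qed
    have "cmod (poly (cpc X0) (complex_of_real t)) \<ge> cmod (complex_of_real t) * c"
      by (rule p0_low) (use t0 t\<gamma> in simp)
    thus ?thesis unfolding poly_cpc_real[OF X0] using pos t0 by (simp add: mult.commute)
  qed
  show ?thesis
  proof (intro exI[of _ \<eta>] conjI \<eta>0 ballI impI allI)
    fix Y :: "real mat" and z assume Y: "Y \<in> carrier_mat n n"
      and hyp: "(\<forall>i<n. \<forall>j<n. \<bar>Y$$(i,j) - X0$$(i,j)\<bar> < \<eta>) \<and> det (-Y) > 0" and z: "ceig Y z"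
    have close: "\<forall>i<n. \<forall>j<n. \<bar>Y$$(i,j) - X0$$(i,j)\<bar> < \<eta>" and dY: "det (-Y) > 0" using hyp by auto
    have YK: "\<bar>Y$$(i,j)\<bar> \<le> K" if "i<n" "j<n" for i j
      using close Kb[OF that] \<eta>1 that by force
    have bnd: "\<forall>i<n. \<forall>j<n. \<bar>X0$$(i,j)\<bar> \<le> K \<and> \<bar>Y$$(i,j)\<bar> \<le> K \<and> \<bar>Y$$(i,j) - X0$$(i,j)\<bar> \<le> \<eta>"
      using YK Kb close by (auto intro: less_imp_le) (smt (verit))
    have diff: "cmod (poly (cpc Y) \<zeta> - poly (cpc X0) \<zeta>) \<le> Cd * \<eta>" if "cmod \<zeta> \<le> R + 1" for \<zeta>
      using cp_diff[OF X0 Y _ _ bnd that] K1 R1 unfolding Cd_def by (simp add: mult.assoc)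
    have eigR: "cmod \<zeta> \<le> R" if "poly (cpc Y) \<zeta> = 0" for \<zeta>
      using eig_bound[OF Y _ that[folded ceig_iff[OF Y]]] YK unfolding R_def by blast
    obtain w where w: "\<forall>\<zeta>. poly (cpc Y) \<zeta> = (\<Prod>i<n. \<zeta> - w i)"
      "\<forall>\<zeta>. order \<zeta> (cpc Y) = card {i. i < n \<and> w i = \<zeta>}"
      using cpc_factor[OF Y] by blast
    have wR: "\<forall>i<n. cmod (w i) \<le> R"
    proof (intro allI impI)
      fix i assume "i < n"
      hence "poly (cpc Y) (w i) = 0" unfolding w(1)[rule_format] by (intro prod_zero) auto
      thus "cmod (w i) \<le> R" by (rule eigR)
    qed
    have zroot: "poly (cpc Y) z = 0" using z ceig_iff[OF Y] by blast
    show "Re z < 0"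
    proof (rule ccontr)
      assume "\<not> Re z < 0"
      hence Rez: "Re z \<ge> 0" by simp
      have zR: "cmod z \<le> R" by (rule eigR[OF zroot])
      have "\<exists>i<n. cmod (z - r i) < t"
      proof (rule ccontr)
        assume "\<not> ?thesis"
        hence "\<forall>i<n. cmod (z - r i) \<ge> t" by auto
        hence "t^n \<le> cmod (poly (cpc X0) z)" by (rule p0_far)
        also have "\<dots> = cmod (poly (cpc Y) z - poly (cpc X0) z)" using zroot by simp
        also have "\<dots> \<le> Cd * \<eta>" by (rule diff) (use zR in simp)
        finally show False using \<eta>a by simp
      qed
      then obtain i where i: "i < n" "cmod (z - r i) < t" by blast
      have "i = i0"
      proof (rule ccontr)
        assume "i \<noteq> i0"
        hence "Re (r i) \<le> - \<gamma>" using \<gamma>le[OF i(1)] by simp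
        moreover have "Re z - Re (r i) < t" using i(2) abs_Re_le_cmod[of "z - r i"] by simp
        ultimately show False using Rez t\<gamma> \<gamma>0 by simp
      qed
      hence zt: "cmod z < t" using i i0 by simp
      have nz: "cpc Y \<noteq> 0" by (rule cpc_nz[OF Y])
      have "\<exists>a b. a < n \<and> b < n \<and> a \<noteq> b \<and> cmod (w a) \<le> t \<and> cmod (w b) \<le> t"
      proof (cases "Im z = 0")
        case False
        have cz: "poly (cpc Y) (cnj z) = 0"
        proof -
          have "\<And>k. coeff (cpc Y) k \<in> \<real>" unfolding cpc_real[OF Y]
            by (simp add: of_real_hom.coeff_map_poly_hom)
          hence "cnj (poly (cpc Y) z) = poly (cpc Y) (cnj z)" by (rule poly_cnj_real)
          thus ?thesis using zroot by simp
        qed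
        have "order z (cpc Y) \<ge> 1" using zroot nz order_root[of "cpc Y" z] by simp
        hence "card {i. i < n \<and> w i = z} \<ge> 1" using w(2) by simp
        from one_index[OF this] obtain a where a: "a < n" "w a = z" by blast
        have "order (cnj z) (cpc Y) \<ge> 1" using cz nz order_root[of "cpc Y" "cnj z"] by simp
        hence "card {i. i < n \<and> w i = cnj z} \<ge> 1" using w(2) by simp
        from one_index[OF this] obtain b where b: "b < n" "w b = cnj z" by blast
        have "cnj z \<noteq> z" using False by (simp add: complex_eq_iff)
        hence "a \<noteq> b" using a b by auto
        thus ?thesis using a b zt by (intro exI[of _ a] exI[of _ b]) auto
      next
        case True
        define x where "x = Re z"
        have zx: "z = complex_of_real x" using True unfolding x_def by (simp add: complex_eq_iff)
        have x0: "x \<ge> 0" using Rez x_def by simp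
        have xt: "x < t" using zt zx x0 by simp
        let ?f = "char_poly Y"
        have fx: "poly ?f x = 0" using zroot unfolding zx poly_cpc_real[OF Y] by simp
        have f0: "poly ?f 0 > 0" using dY char_poly_at0[OF Y] by simp
        have xpos: "x > 0" using x0 fx f0 by (cases "x = 0") auto
        have ft: "poly ?f t > 0"
        proof -
          have "cmod (poly (cpc Y) (complex_of_real t) - poly (cpc X0) (complex_of_real t)) \<le> Cd*\<eta>"
            by (rule diff) (use t1 R1 t0 in simp)
          hence "\<bar>poly ?f t - poly (char_poly X0) t\<bar> \<le> Cd*\<eta>"
            unfolding poly_cpc_real[OF Y] poly_cpc_real[OF X0] by (simp only: norm_of_real of_real_diff[symmetric])
          moreover have "c*t > 0" using c0 t0 by simp
          ultimately show ?thesis using f0t \<eta>b by linarith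
        qed
        obtain g where g: "?f = [:-x,1:] * g" using fx by (metis poly_eq_0_iff_dvd dvdE)
        have e0: "poly ?f 0 = - (x * poly g 0)" unfolding g by simp
        have g0: "poly g 0 < 0"
        proof (rule ccontr)
          assume "\<not> poly g 0 < 0"
          hence "x * poly g 0 \<ge> 0" using xpos by simp
          thus False using f0 e0 by linarith
        qed
        have et: "poly ?f t = (t - x) * poly g t" unfolding g by (simp add: left_diff_distrib)
        have gt: "poly g t > 0"
        proof (rule ccontr)
          assume "\<not> poly g t > 0"
          hence "(t - x) * poly g t \<le> 0" using xt by (intro mult_nonneg_nonpos) auto
          thus False using ft et by linarith
        qed
        obtain y where y: "0 < y" "y < t" "poly g y = 0" using poly_IVT_pos[OF t0 g0 gt] by auto
        obtain h where h: "g = [:-y,1:] * h" using y(3) by (metis poly_eq_0_iff_dvd dvdE)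
        have cY: "cpc Y = [:-complex_of_real x,1:] * ([:-complex_of_real y,1:] * map_poly of_real h)"
          unfolding cpc_real[OF Y] g h ofr_mult by simp
        have nz1: "[:-complex_of_real x,1:] * ([:-complex_of_real y,1:] * map_poly of_real h) \<noteq> 0"
          using nz cY by simp
        hence nz2: "[:-complex_of_real y,1:] * map_poly of_real h \<noteq> 0" by auto
        have ord: "order v (cpc Y) = order v [:-complex_of_real x,1:] + (order v [:-complex_of_real y,1:]
            + order v (map_poly of_real h))" for v
          unfolding cY order_mult[OF nz1] order_mult[OF nz2] ..
        show ?thesis
        proof (cases "x = y")
          case True
          have "order (complex_of_real x) (cpc Y) \<ge> 2" unfolding ord using True
            by (simp add: order_linear')
          hence "card {i. i < n \<and> w i = complex_of_real x} \<ge> 2" using w(2) by simp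
          from two_indices[OF this] obtain a b where ab: "a < n" "b < n" "a \<noteq> b" "w a = complex_of_real x" "w b = complex_of_real x"
            by blast
          thus ?thesis using xt x0 by (intro exI[of _ a] exI[of _ b]) auto
        next
          case False
          have "order (complex_of_real x) (cpc Y) \<ge> 1" unfolding ord by (simp add: order_linear')
          hence "card {i. i < n \<and> w i = complex_of_real x} \<ge> 1" using w(2) by simp
          from one_index[OF this] obtain a where a: "a < n" "w a = complex_of_real x" by blast
          have "order (complex_of_real y) (cpc Y) \<ge> 1" unfolding ord by (simp add: order_linear')
          hence "card {i. i < n \<and> w i = complex_of_real y} \<ge> 1" using w(2) by simp
          from one_index[OF this] obtain b where b: "b < n" "w b = complex_of_real y" by blast
          have "a \<noteq> b" using a b False by auto
          thus ?thesis using a b xt x0 y by (intro exI[of _ a] exI[of _ b]) auto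
        qed
      qed
      then obtain a b where ab: "a < n" "b < n" "a \<noteq> b" "cmod (w a) \<le> t" "cmod (w b) \<le> t" by blast
      have up: "cmod (poly (cpc Y) (complex_of_real t)) \<le> (2*t)^2 * (t+R)^(n-2)"
        unfolding w(1)[rule_format] by (rule prod_bound_two[OF ab wR]) (use t0 in simp)
      also have "\<dots> \<le> (2*t)^2 * (1+R)^(n-2)"
        using t1 t0 R1 by (intro mult_left_mono power_mono) auto
      also have "\<dots> = t/4 * (16 * t * (1+R)^(n-2))" by (simp add: power2_eq_square)
      also have "\<dots> \<le> t/4 * c" using tc t0 by (intro mult_left_mono) auto
      finally have up': "cmod (poly (cpc Y) (complex_of_real t)) \<le> t/4 * c" .
      have "cmod (poly (cpc X0) (complex_of_real t)) \<ge> c * t"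
        using p0_low[of "complex_of_real t"] t0 t\<gamma> by (simp add: mult.commute)
      moreover have "cmod (poly (cpc Y) (complex_of_real t) - poly (cpc X0) (complex_of_real t)) \<le> Cd * \<eta>"
        by (rule diff) (use t1 R1 t0 in simp)
      moreover have "cmod (poly (cpc X0) (complex_of_real t)) \<le> cmod (poly (cpc Y) (complex_of_real t))
          + cmod (poly (cpc Y) (complex_of_real t) - poly (cpc X0) (complex_of_real t))"
        by (metis norm_triangle_sub norm_minus_commute)
      moreover have "t/4*c = (c*t)/4" by simp
      moreover have "c*t > 0" using c0 t0 by simp
      ultimately show False using up' \<eta>b by linarith
    qed
  qed
qed

lemma A1_roots:
  fixes A :: "real mat"
  assumes A: "A \<in> carrier_mat n n" and d: "det A = 0"
    and s: "(\<Sum>z\<in>{z. ceig A z \<and> Re z < 0}. alg_mult A z) = n - 1"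
  shows "\<exists>r i0. (\<forall>z. poly (cpc A) z = (\<Prod>i<n. z - r i)) \<and> i0 < n \<and> r i0 = 0 \<and>
           (\<forall>i<n. i \<noteq> i0 \<longrightarrow> Re (r i) < 0)"
proof -
  obtain r where r: "\<forall>z. poly (cpc A) z = (\<Prod>i<n. z - r i)"
    "\<forall>z. order z (cpc A) = card {i. i < n \<and> r i = z}" using cpc_factor[OF A] by blast
  define I where "I = {i. i < n \<and> Re (r i) < 0}"
  have finI: "finite I" unfolding I_def by simp
  have ceigr: "ceig A z \<longleftrightarrow> (\<exists>i<n. r i = z)" for z
    unfolding ceig_iff[OF A] r(1)[rule_format] by auto
  have set_eq: "{z. ceig A z \<and> Re z < 0} = r ` I" unfolding I_def ceigr by auto
  have "card I = (\<Sum>y\<in>r ` I. card {x\<in>I. r x = y})"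
    using sum.image_gen[OF finI, of "\<lambda>_. 1::nat" r] by simp
  also have "\<dots> = (\<Sum>y\<in>r ` I. alg_mult A y)"
  proof (rule sum.cong[OF refl])
    fix y assume "y \<in> r ` I"
    hence "Re y < 0" unfolding I_def by auto
    hence "{x\<in>I. r x = y} = {i. i < n \<and> r i = y}" unfolding I_def by auto
    thus "card {x\<in>I. r x = y} = alg_mult A y"
      unfolding alg_mult_def cpc_def[symmetric] r(2)[rule_format] by simp
  qed
  also have "\<dots> = n - 1" using s unfolding set_eq .
  finally have cI: "card I = n - 1" .
  have "poly (cpc A) 0 = 0"
    using poly_cpc_real[OF A, of 0] char_poly_at0[OF A] det_0_negate[OF A] d by simp
  then obtain i0 where i0: "i0 < n" "r i0 = 0" unfolding r(1)[rule_format] by auto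
  have sub: "I \<subseteq> {..<n} - {i0}" unfolding I_def using i0 by auto
  have "card ({..<n} - {i0}) = n - 1" using i0 by simp
  hence "I = {..<n} - {i0}" using card_subset_eq[OF _ sub] cI by simp
  hence "\<forall>i<n. i \<noteq> i0 \<longrightarrow> Re (r i) < 0" unfolding I_def by auto
  thus ?thesis using r(1) i0 by blast
qed

lemma small_kappa:
  fixes A J2 J4 :: "real mat" and r :: "nat \<Rightarrow> complex"
  assumes A: "A \<in> carrier_mat n n" and J2: "J2 \<in> carrier_mat n n" and J4: "J4 \<in> carrier_mat n n"
    and n: "n \<ge> 1"
    and r: "\<forall>z. poly (cpc A) z = (\<Prod>i<n. z - r i)"
    and i0: "i0 < n" "r i0 = 0" and neg: "\<forall>i<n. i \<noteq> i0 \<longrightarrow> Re (r i) < 0"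
  shows "\<exists>kh>0. \<forall>\<kappa>. 0 < \<kappa> \<and> \<kappa> < kh \<and> det (- (A + \<kappa>^2 \<cdot>\<^sub>m J2 + \<kappa>^4 \<cdot>\<^sub>m J4)) > 0
           \<longrightarrow> spectral_abscissa (A + \<kappa>^2 \<cdot>\<^sub>m J2 + \<kappa>^4 \<cdot>\<^sub>m J4) < 0"
proof -
  obtain \<eta> where \<eta>: "\<eta> > 0" and P: "\<forall>Y \<in> carrier_mat n n. (\<forall>i<n. \<forall>j<n. \<bar>Y$$(i,j) - A$$(i,j)\<bar> < \<eta>)
      \<and> det (-Y) > 0 \<longrightarrow> (\<forall>z. ceig Y z \<longrightarrow> Re z < 0)"
    using perturb[OF A n r i0 neg] by blast
  define S where "S = (\<Sum>i<n. \<Sum>j<n. \<bar>J2$$(i,j)\<bar> + \<bar>J4$$(i,j)\<bar>) + 1"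
  have S1: "S \<ge> 1" unfolding S_def by (simp add: sum_nonneg)
  have Sb: "\<bar>J2$$(i,j)\<bar> + \<bar>J4$$(i,j)\<bar> \<le> S" if "i < n" "j < n" for i j
  proof -
    have "\<bar>J2$$(i,j)\<bar> + \<bar>J4$$(i,j)\<bar> \<le> (\<Sum>j<n. \<bar>J2$$(i,j)\<bar> + \<bar>J4$$(i,j)\<bar>)"
      by (rule member_le_sum[of j _ "\<lambda>j. \<bar>J2$$(i,j)\<bar> + \<bar>J4$$(i,j)\<bar>"]) (use that in auto)
    also have "\<dots> \<le> (\<Sum>i<n. \<Sum>j<n. \<bar>J2$$(i,j)\<bar> + \<bar>J4$$(i,j)\<bar>)"
      by (rule member_le_sum[of i _ "\<lambda>i. \<Sum>j<n. \<bar>J2$$(i,j)\<bar> + \<bar>J4$$(i,j)\<bar>"])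
        (use that in \<open>auto intro: sum_nonneg\<close>)
    finally show ?thesis unfolding S_def by simp
  qed
  define kh where "kh = min 1 (\<eta> / S)"
  have kh0: "kh > 0" unfolding kh_def using \<eta> S1 by simp
  show ?thesis
  proof (intro exI[of _ kh] conjI kh0 allI impI)
    fix \<kappa> :: real assume h: "0 < \<kappa> \<and> \<kappa> < kh \<and> det (- (A + \<kappa>^2 \<cdot>\<^sub>m J2 + \<kappa>^4 \<cdot>\<^sub>m J4)) > 0"
    let ?Y = "A + \<kappa>^2 \<cdot>\<^sub>m J2 + \<kappa>^4 \<cdot>\<^sub>m J4"
    have Y: "?Y \<in> carrier_mat n n" using A J2 J4 by simp
    have k1: "\<kappa> \<le> 1" and kS: "\<kappa> * S < \<eta>" and k0: "\<kappa> > 0" using h S1 unfolding kh_def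
      by (auto simp: pos_less_divide_eq)
    have close: "\<forall>i<n. \<forall>j<n. \<bar>?Y$$(i,j) - A$$(i,j)\<bar> < \<eta>"
    proof (intro allI impI)
      fix i j assume ij: "i < n" "j < n"
      have "?Y$$(i,j) - A$$(i,j) = \<kappa>^2 * J2$$(i,j) + \<kappa>^4 * J4$$(i,j)" using A J2 J4 ij by simp
      hence "\<bar>?Y$$(i,j) - A$$(i,j)\<bar> \<le> \<kappa>^2 * \<bar>J2$$(i,j)\<bar> + \<kappa>^4 * \<bar>J4$$(i,j)\<bar>"
        by (simp add: abs_mult order.trans[OF abs_triangle_ineq])
      also have "\<dots> \<le> \<kappa> * \<bar>J2$$(i,j)\<bar> + \<kappa> * \<bar>J4$$(i,j)\<bar>"
      proof (intro add_mono mult_right_mono)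
        show "\<kappa>^2 \<le> \<kappa>" using k1 k0 by (simp add: power2_eq_square mult_left_le)
        show "\<kappa>^4 \<le> \<kappa>" using k1 k0 by (metis power_le_one_iff less_le power_decreasing power_one_right one_le_numeral zero_less_numeral)
      qed auto
      also have "\<dots> = \<kappa> * (\<bar>J2$$(i,j)\<bar> + \<bar>J4$$(i,j)\<bar>)" by (simp add: algebra_simps)
      also have "\<dots> \<le> \<kappa> * S" using Sb[OF ij] k0 by (intro mult_left_mono) auto
      finally show "\<bar>?Y$$(i,j) - A$$(i,j)\<bar> < \<eta>" using kS by simp
    qed
    have "\<forall>z. ceig ?Y z \<longrightarrow> Re z < 0" using P Y close h by blast
    thus "spectral_abscissa ?Y < 0" using sa_neg_iff[OF Y n] by blast
  qed
qed

lemma qform_unit: fixes M :: "real mat" assumes "M \<in> carrier_mat n n" "i < n"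
  shows "qform M (unit_vec n i) = M$$(i,i)"
proof -
  have "M *\<^sub>v unit_vec n i \<in> carrier_vec n" using assms by simp
  hence "qform M (unit_vec n i) = (M *\<^sub>v unit_vec n i) $ i"
    unfolding qform_def using assms by (simp add: scalar_prod_left_unit)
  also have "\<dots> = M$$(i,i)" using assms by (simp add: scalar_prod_def unit_vec_def sum.remove[of _ i] cong: if_cong)
  finally show ?thesis .
qed

lemma det_poly: fixes A J2 J4 :: "real mat"
  assumes A: "A \<in> carrier_mat n n" and J2: "J2 \<in> carrier_mat n n" and J4: "J4 \<in> carrier_mat n n"
  shows "\<exists>P. \<forall>\<kappa>. det (- (A + \<kappa>^2 \<cdot>\<^sub>m J2 + \<kappa>^4 \<cdot>\<^sub>m J4)) = poly P \<kappa>"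
proof -
  define Bp where "Bp = mat n n (\<lambda>(i,j). [: - A$$(i,j), 0, - J2$$(i,j), 0, - J4$$(i,j) :])"
  show ?thesis
  proof (intro exI[of _ "det Bp"] allI)
    fix \<kappa> :: real
    show "det (- (A + \<kappa>^2 \<cdot>\<^sub>m J2 + \<kappa>^4 \<cdot>\<^sub>m J4)) = poly (det Bp) \<kappa>"
      by (rule poly_det_cong[of _ n, symmetric])
        (use A J2 J4 in \<open>auto simp: Bp_def algebra_simps power2_eq_square power4_eq_xxxx\<close>)
  qed
qed

lemma det_at0: fixes A J2 J4 :: "real mat"
  assumes A: "A \<in> carrier_mat n n" and J2: "J2 \<in> carrier_mat n n" and J4: "J4 \<in> carrier_mat n n"
    and d: "det A = 0"
  shows "det (- (A + (0::real)^2 \<cdot>\<^sub>m J2 + (0::real)^4 \<cdot>\<^sub>m J4)) = 0"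
proof -
  have "A + (0::real)^2 \<cdot>\<^sub>m J2 + (0::real)^4 \<cdot>\<^sub>m J4 = A"
    using A J2 J4 by (intro eq_matI) auto
  thus ?thesis using det_0_negate[OF A] d by simp
qed

lemma large_kappa:
  fixes A :: "real mat" and a b :: "nat \<Rightarrow> real"
  assumes A: "A \<in> carrier_mat n n" and n: "n \<ge> 1" and A2: "A2 n (mat_diag n a) (mat_diag n b)"
  shows "\<exists>K. \<forall>\<kappa>\<ge>K. spectral_abscissa (A + \<kappa>^2 \<cdot>\<^sub>m mat_diag n a + \<kappa>^4 \<cdot>\<^sub>m mat_diag n b) < 0"
proof -
  from A2 obtain k where semi: "neg_semidef n (mat_diag n b)"
    and nd: "neg_def n (k^2 \<cdot>\<^sub>m mat_diag n a + k^4 \<cdot>\<^sub>m mat_diag n b)" unfolding A2_def by blast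
  have b0: "b i \<le> 0" if "i < n" for i
  proof -
    have "qform (mat_diag n b) (unit_vec n i) \<le> 0" using semi unfolding neg_semidef_def by simp
    thus ?thesis using qform_unit[of "mat_diag n b" n i] that by (simp add: mat_diag_def)
  qed
  define s where "s i = k^2 * a i + k^4 * b i" for i
  have s0: "s i < 0" if "i < n" for i
  proof -
    have "unit_vec n i \<noteq> 0\<^sub>v n" using that
      by (metis index_unit_vec(1) index_zero_vec(1) less_irrefl zero_neq_one)
    hence "qform (k^2 \<cdot>\<^sub>m mat_diag n a + k^4 \<cdot>\<^sub>m mat_diag n b) (unit_vec n i) < 0"
      using nd unit_vec_carrier[of n i] unfolding neg_def_def by blast
    thus ?thesis using qform_unit[of "k^2 \<cdot>\<^sub>m mat_diag n a + k^4 \<cdot>\<^sub>m mat_diag n b" n i] that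
      by (simp add: mat_diag_def s_def)
  qed
  have k0: "k^2 > 0"
  proof (rule ccontr)
    assume "\<not> k^2 > 0"
    hence "k = 0" by simp
    thus False using s0[of 0] n unfolding s_def by simp
  qed
  define \<sigma> where "\<sigma> = Min ((\<lambda>i. - s i) ` {..<n})"
  have ne: "{..<n} \<noteq> {}" using n lessThan_empty_iff by (metis not_one_le_zero)
  have \<sigma>0: "\<sigma> > 0" unfolding \<sigma>_def using ne s0 by (subst Min_gr_iff) auto
  have \<sigma>le: "\<sigma> \<le> - s i" if "i < n" for i unfolding \<sigma>_def by (rule Min_le) (use that in auto)
  define G where "G = (\<Sum>i<n. \<Sum>j<n. \<bar>A$$(i,j)\<bar>)"
  have G0: "G \<ge> 0" unfolding G_def by (simp add: sum_nonneg)
  have Gb: "(\<Sum>j\<in>{0..<n}. \<bar>A$$(i,j)\<bar>) \<le> G" if "i < n" for i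
    unfolding G_def atLeast0LessThan
    by (rule member_le_sum[of i _ "\<lambda>i. \<Sum>j<n. \<bar>A$$(i,j)\<bar>"]) (use that in \<open>auto intro: sum_nonneg\<close>)
  define K where "K = max 1 (k^2 * (1 + 2*G/\<sigma>))"
  show ?thesis
  proof (intro exI[of _ K] allI impI)
    fix \<kappa> :: real assume kK: "\<kappa> \<ge> K"
    let ?M = "A + \<kappa>^2 \<cdot>\<^sub>m mat_diag n a + \<kappa>^4 \<cdot>\<^sub>m mat_diag n b"
    have M: "?M \<in> carrier_mat n n" using A by simp
    define d where "d i = \<kappa>^2 * a i + \<kappa>^4 * b i" for i
    have ent: "?M$$(i,j) = A$$(i,j) + (if i = j then d i else 0)" if "i < n" "j < n" for i j
      using that A by (simp add: mat_diag_def d_def)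
    have \<kappa>1: "\<kappa> \<ge> 1" using kK unfolding K_def by simp
    have "\<kappa>^2 \<ge> \<kappa>" using \<kappa>1 by (simp add: power2_eq_square)
    hence \<kappa>2: "\<kappa>^2 \<ge> k^2 * (1 + 2*G/\<sigma>)" using kK unfolding K_def by simp
    define q where "q = \<kappa>^2 / k^2"
    have q: "q \<ge> 1 + 2*G/\<sigma>" unfolding q_def using \<kappa>2 k0 by (simp add: pos_le_divide_eq mult.commute)
    have q1: "q \<ge> 1" using q G0 \<sigma>0 by (smt (verit) divide_nonneg_pos)
    have kq: "\<kappa>^2 = q * k^2" unfolding q_def using k0 by simp
    have dbound: "d i \<le> q * s i" if "i < n" for i
    proof -
      have "\<kappa>^4 = (\<kappa>^2)^2" by simp
      hence e4: "\<kappa>^4 = q^2 * k^4" unfolding kq by (simp add: power_mult_distrib)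
      have "d i - q * s i = (q^2 - q) * k^4 * b i" unfolding d_def s_def kq e4
        by (simp add: algebra_simps power2_eq_square)
      moreover have "(q^2 - q) * k^4 \<ge> 0" using q1 by (simp add: power2_eq_square)
      ultimately show ?thesis using b0[OF that] by (smt (verit) mult_nonneg_nonpos)
    qed
    have diag: "d i < - 2 * G" if "i < n" for i
    proof -
      have "q * s i \<le> q * (- \<sigma>)" using \<sigma>le[OF that] q1 by (intro mult_left_mono) auto
      also have "\<dots> \<le> (1 + 2*G/\<sigma>) * (- \<sigma>)" using q \<sigma>0 by (intro mult_right_mono_neg) auto
      also have "\<dots> = - \<sigma> - 2*G" using \<sigma>0 by (simp add: field_simps)
      finally show ?thesis using dbound[OF that] \<sigma>0 by simp
    qed
    have "\<forall>z. ceig ?M z \<longrightarrow> Re z < 0"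
    proof (intro allI impI)
      fix z assume z: "ceig ?M z"
      let ?Mc = "map_mat complex_of_real ?M"
      have Mc: "?Mc \<in> carrier_mat n n" using M by simp
      have Mce: "?Mc$$(i,j) = complex_of_real (?M$$(i,j))" if "i<n" "j<n" for i j
        using that carrier_matD[OF M] by simp
      from gersh[OF Mc z[unfolded ceig_def]] obtain i where
        i: "i < n" "cmod (z - ?Mc$$(i,i)) \<le> (\<Sum>j\<in>{0..<n}-{i}. cmod (?Mc$$(i,j)))" by blast
      have "(\<Sum>j\<in>{0..<n}-{i}. cmod (?Mc$$(i,j))) = (\<Sum>j\<in>{0..<n}-{i}. \<bar>A$$(i,j)\<bar>)"
        using i(1) by (intro sum.cong) (auto simp: Mce ent)
      also have "\<dots> \<le> (\<Sum>j\<in>{0..<n}. \<bar>A$$(i,j)\<bar>)" by (rule sum_mono2) auto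
      also have "\<dots> \<le> G" by (rule Gb[OF i(1)])
      finally have g1: "cmod (z - ?Mc$$(i,i)) \<le> G" using i(2) by linarith
      have "\<bar>A$$(i,i)\<bar> \<le> (\<Sum>j\<in>{0..<n}. \<bar>A$$(i,j)\<bar>)" by (rule member_le_sum) (use i in auto)
      hence g2: "A$$(i,i) \<le> G" using Gb[OF i(1)] by linarith
      have Mii: "?Mc$$(i,i) = complex_of_real (A$$(i,i) + d i)" using Mce[OF i(1) i(1)] ent[OF i(1) i(1)] by simp
      have "Re (z - ?Mc$$(i,i)) \<le> cmod (z - ?Mc$$(i,i))" by (rule complex_Re_le_cmod)
      moreover have "Re (?Mc$$(i,i)) = A$$(i,i) + d i" using Mii by simp
      moreover have "Re z = Re (?Mc$$(i,i)) + Re (z - ?Mc$$(i,i))" by simp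
      ultimately show "Re z < 0" using g1 g2 diag[OF i(1)] by linarith
    qed
    thus "spectral_abscissa ?M < 0" using sa_neg_iff[OF M n] by blast
  qed
qed

lemma sys_entry:
  fixes B C :: "int mat" and d a b :: "nat \<Rightarrow> real"
  assumes B: "B \<in> carrier_mat n m" and C: "C \<in> carrier_mat m n" and i: "i < n" and k: "k < n"
  shows "(- sysmat B C (mat_diag m d) (mat_diag n a) (mat_diag n b) \<kappa>) $$ (i,k)
     = - ((\<Sum>l<m. real_of_int (B$$(i,l)) * d l * real_of_int (C$$(l,k)))
          + (if i = k then \<kappa>^2 * a i + \<kappa>^4 * b i else 0))"
proof -
  have BD: "map_mat real_of_int B * mat_diag m d = mat n m (\<lambda>(i,j). map_mat real_of_int B $$ (i,j) * d j)"
    using mat_diag_mult_right[of "map_mat real_of_int B" n m d] B by simp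
  have "(map_mat real_of_int B * mat_diag m d * map_mat real_of_int C) $$ (i,k)
      = (\<Sum>l<m. real_of_int (B$$(i,l)) * d l * real_of_int (C$$(l,k)))"
    unfolding BD using B C i k carrier_matD[OF B] carrier_matD[OF C] by (simp add: scalar_prod_def atLeast0LessThan)
  thus ?thesis unfolding sysmat_def using B C i k by (simp add: mat_diag_def)
qed

lemma det_aff_param:
  fixes Mx :: "(nat \<Rightarrow> real) \<Rightarrow> real mat"
  assumes car: "\<And>x. Mx x \<in> carrier_mat n n"
    and struct: "\<And>w i k. i < n \<Longrightarrow> k < n \<Longrightarrow> Mx (x(j:=w)) $$ (i,k) = \<alpha> i k + w * (u i * v k)"
  shows "det (Mx (x(j := (1-l)*t + l*s))) = (1-l) * det (Mx (x(j:=t))) + l * det (Mx (x(j:=s)))"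
proof -
  let ?P = "Mx (x(j:=t))" and ?Q = "Mx (x(j:=s))"
  have eq: "Mx (x(j := (1-l)*t + l*s)) = mat n n (\<lambda>(i,k). (1-l) * ?P$$(i,k) + l * ?Q$$(i,k))"
  proof (rule eq_matI)
    fix i k assume "i < dim_row (mat n n (\<lambda>(i,k). (1-l) * ?P$$(i,k) + l * ?Q$$(i,k)))"
      "k < dim_col (mat n n (\<lambda>(i,k). (1-l) * ?P$$(i,k) + l * ?Q$$(i,k)))"
    hence ik: "i < n" "k < n" by auto
    show "Mx (x(j := (1-l)*t + l*s)) $$ (i,k) = mat n n (\<lambda>(i,k). (1-l) * ?P$$(i,k) + l * ?Q$$(i,k)) $$ (i,k)"
      using ik by (simp add: struct algebra_simps)
  qed (use car[of "x(j := (1-l)*t + l*s)"] in auto)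
  have "det (mat n n (\<lambda>(i,k). (1-l) * ?P$$(i,k) + l * ?Q$$(i,k))) = (1-l) * det ?P + l * det ?Q"
  proof (rule det_rank1_affine[OF car car])
    fix i k assume ik: "i < n" "k < n"
    show "?Q$$(i,k) = ?P$$(i,k) + (s - t) * u i * v k"
      using ik by (simp add: struct algebra_simps)
  qed
  thus ?thesis unfolding eq .
qed

lemma vertex_min:
  fixes G :: "(nat \<Rightarrow> real) \<Rightarrow> real" and lo hi x :: "nat \<Rightarrow> real"
  assumes aff: "\<And>x j t s u. j < N \<Longrightarrow> G (x(j := (1-u)*t + u*s)) = (1-u) * G (x(j:=t)) + u * G (x(j:=s))"
    and box: "\<forall>j<N. lo j \<le> x j \<and> x j \<le> hi j"
  shows "\<exists>y. (\<forall>j<N. y j \<in> {lo j, hi j}) \<and> (\<forall>j. N \<le> j \<longrightarrow> y j = x j) \<and> G y \<le> G x"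
proof -
  have "k \<le> N \<Longrightarrow> \<exists>y. (\<forall>j<k. y j \<in> {lo j, hi j}) \<and> (\<forall>j. k \<le> j \<longrightarrow> y j = x j) \<and> G y \<le> G x" for k
  proof (induct k)
    case 0 show ?case by (intro exI[of _ x]) auto
  next
    case (Suc k)
    then obtain y where y: "\<forall>j<k. y j \<in> {lo j, hi j}" "\<forall>j. k \<le> j \<longrightarrow> y j = x j" "G y \<le> G x" by auto
    have kN: "k < N" using Suc by simp
    have yk: "lo k \<le> y k" "y k \<le> hi k" using y(2) box kN by auto
    have "\<exists>c\<in>{lo k, hi k}. G (y(k := c)) \<le> G y"
    proof (cases "lo k = hi k")
      case True
      hence "y(k := lo k) = y" using yk by auto
      thus ?thesis by auto
    next
      case False
      hence lh: "lo k < hi k" using yk by simp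
      define u where "u = (y k - lo k) / (hi k - lo k)"
      have u01: "0 \<le> u" "u \<le> 1" unfolding u_def using lh yk by (auto simp: field_simps)
      have h: "u * (hi k - lo k) = y k - lo k" unfolding u_def using lh by simp
      have "(1-u) * lo k + u * hi k = lo k + u * (hi k - lo k)" by (simp add: algebra_simps)
      hence yk_eq: "(1-u) * lo k + u * hi k = y k" using h by simp
      have "G y = G (y(k := (1-u) * lo k + u * hi k))" unfolding yk_eq by simp
      also have "\<dots> = (1-u) * G (y(k := lo k)) + u * G (y(k := hi k))" by (rule aff[OF kN])
      finally have Gy: "G y = (1-u) * G (y(k := lo k)) + u * G (y(k := hi k))" .
      let ?m = "min (G (y(k := lo k))) (G (y(k := hi k)))"
      have "(1-u) * ?m \<le> (1-u) * G (y(k := lo k))" using u01 by (intro mult_left_mono) auto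
      moreover have "u * ?m \<le> u * G (y(k := hi k))" using u01 by (intro mult_left_mono) auto
      ultimately have "?m \<le> G y" unfolding Gy by (simp add: algebra_simps)
      thus ?thesis by (cases "G (y(k := lo k)) \<le> G (y(k := hi k))") auto
    qed
    then obtain c where c: "c \<in> {lo k, hi k}" "G (y(k := c)) \<le> G y" by blast
    have Gc: "G (y(k := c)) \<le> G x" using c y(3) by linarith
    show ?case
    proof (intro exI[of _ "y(k := c)"] conjI)
      show "\<forall>j<Suc k. (y(k := c)) j \<in> {lo j, hi j}" using y c by (auto simp: less_Suc_eq)
      show "\<forall>j. Suc k \<le> j \<longrightarrow> (y(k := c)) j = x j" using y by auto
    qed (rule Gc)
  qed
  from this[of N] show ?thesis by simp
qed

lemma vertex_max:
  fixes G :: "(nat \<Rightarrow> real) \<Rightarrow> real" and lo hi x :: "nat \<Rightarrow> real"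
  assumes aff: "\<And>x j t s u. j < N \<Longrightarrow> G (x(j := (1-u)*t + u*s)) = (1-u) * G (x(j:=t)) + u * G (x(j:=s))"
    and box: "\<forall>j<N. lo j \<le> x j \<and> x j \<le> hi j"
  shows "\<exists>y. (\<forall>j<N. y j \<in> {lo j, hi j}) \<and> (\<forall>j. N \<le> j \<longrightarrow> y j = x j) \<and> G y \<ge> G x"
proof -
  have "\<exists>y. (\<forall>j<N. y j \<in> {lo j, hi j}) \<and> (\<forall>j. N \<le> j \<longrightarrow> y j = x j) \<and> (\<lambda>x. - G x) y \<le> (\<lambda>x. - G x) x"
  proof (rule vertex_min[OF _ box])
    fix x j t s u assume "j < N"
    have e: "G (x(j := (1-u)*t + u*s)) = (1-u) * G (x(j:=t)) + u * G (x(j:=s))" by (rule aff) fact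
    show "- G (x(j := (1-u)*t + u*s)) = (1-u) * (- G (x(j:=t))) + u * (- G (x(j:=s)))"
      unfolding e by (simp add: algebra_simps)
  qed
  thus ?thesis by auto
qed

definition Fv :: "int mat \<Rightarrow> int mat \<Rightarrow> nat \<Rightarrow> nat \<Rightarrow> real \<Rightarrow> (nat\<Rightarrow>real) \<Rightarrow> (nat\<Rightarrow>real) \<Rightarrow> (nat\<Rightarrow>real) \<Rightarrow> real" where
  "Fv B C n m \<kappa> d a b = det (- sysmat B C (mat_diag m d) (mat_diag n a) (mat_diag n b) \<kappa>)"

lemma sysmat_carrier:
  assumes "B \<in> carrier_mat n m" "C \<in> carrier_mat m n" "\<Delta> \<in> carrier_mat m m" "J2 \<in> carrier_mat n n" "J4 \<in> carrier_mat n n"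
  shows "sysmat B C \<Delta> J2 J4 \<kappa> \<in> carrier_mat n n"
  unfolding sysmat_def using assms by (intro add_carrier_mat mult_carrier_mat smult_carrier_mat) auto

lemma aff_d:
  assumes B: "B \<in> carrier_mat n m" and C: "C \<in> carrier_mat m n" and j: "j < m"
  shows "Fv B C n m \<kappa> (d(j := (1-u)*t + u*s)) a b = (1-u) * Fv B C n m \<kappa> (d(j:=t)) a b + u * Fv B C n m \<kappa> (d(j:=s)) a b"
  unfolding Fv_def
proof (rule det_aff_param[where Mx = "\<lambda>d. - sysmat B C (mat_diag m d) (mat_diag n a) (mat_diag n b) \<kappa>"])
  show "\<And>x. - sysmat B C (mat_diag m x) (mat_diag n a) (mat_diag n b) \<kappa> \<in> carrier_mat n n"
    using sysmat_carrier[OF B C] by simp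
  fix w i k assume ik: "i < n" "k < n"
  let ?f = "\<lambda>e l. real_of_int (B$$(i,l)) * e l * real_of_int (C$$(l,k))"
  have "(\<Sum>l<m. ?f (d(j:=w)) l) = ?f (d(j:=w)) j + (\<Sum>l\<in>{..<m}-{j}. ?f (d(j:=w)) l)"
    using j by (subst sum.remove[of _ j]) auto
  also have "(\<Sum>l\<in>{..<m}-{j}. ?f (d(j:=w)) l) = (\<Sum>l\<in>{..<m}-{j}. ?f d l)"
    by (intro sum.cong) auto
  finally have eq: "(\<Sum>l<m. ?f (d(j:=w)) l) = real_of_int (B$$(i,j)) * w * real_of_int (C$$(j,k)) + (\<Sum>l\<in>{..<m}-{j}. ?f d l)" by simp
  show "(- sysmat B C (mat_diag m (d(j := w))) (mat_diag n a) (mat_diag n b) \<kappa>) $$ (i, k) =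
    (- ((\<Sum>l\<in>{..<m}-{j}. ?f d l) + (if i = k then \<kappa>^2 * a i + \<kappa>^4 * b i else 0)))
     + w * ((- real_of_int (B$$(i,j))) * real_of_int (C$$(j,k)))"
    unfolding sys_entry[OF B C ik] eq by (simp add: algebra_simps)
qed

lemma aff_a:
  assumes B: "B \<in> carrier_mat n m" and C: "C \<in> carrier_mat m n" and j: "j < n"
  shows "Fv B C n m \<kappa> d (a(j := (1-u)*t + u*s)) b = (1-u) * Fv B C n m \<kappa> d (a(j:=t)) b + u * Fv B C n m \<kappa> d (a(j:=s)) b"
  unfolding Fv_def
proof (rule det_aff_param[where Mx = "\<lambda>a. - sysmat B C (mat_diag m d) (mat_diag n a) (mat_diag n b) \<kappa>"])
  show "\<And>x. - sysmat B C (mat_diag m d) (mat_diag n x) (mat_diag n b) \<kappa> \<in> carrier_mat n n"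
    using sysmat_carrier[OF B C] by simp
  fix w i k assume ik: "i < n" "k < n"
  show "(- sysmat B C (mat_diag m d) (mat_diag n (a(j:=w))) (mat_diag n b) \<kappa>) $$ (i, k) =
    (- ((\<Sum>l<m. real_of_int (B$$(i,l)) * d l * real_of_int (C$$(l,k)))
       + (if i = k then (if i = j then 0 else \<kappa>^2 * a i) + \<kappa>^4 * b i else 0)))
     + w * ((if i = j then -(\<kappa>^2) else 0) * (if k = j then 1 else 0))"
    unfolding sys_entry[OF B C ik] by (auto simp: algebra_simps)
qed

lemma aff_b:
  assumes B: "B \<in> carrier_mat n m" and C: "C \<in> carrier_mat m n" and j: "j < n"
  shows "Fv B C n m \<kappa> d a (b(j := (1-u)*t + u*s)) = (1-u) * Fv B C n m \<kappa> d a (b(j:=t)) + u * Fv B C n m \<kappa> d a (b(j:=s))"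
  unfolding Fv_def
proof (rule det_aff_param[where Mx = "\<lambda>b. - sysmat B C (mat_diag m d) (mat_diag n a) (mat_diag n b) \<kappa>"])
  show "\<And>x. - sysmat B C (mat_diag m d) (mat_diag n a) (mat_diag n x) \<kappa> \<in> carrier_mat n n"
    using sysmat_carrier[OF B C] by simp
  fix w i k assume ik: "i < n" "k < n"
  show "(- sysmat B C (mat_diag m d) (mat_diag n a) (mat_diag n (b(j:=w))) \<kappa>) $$ (i, k) =
    (- ((\<Sum>l<m. real_of_int (B$$(i,l)) * d l * real_of_int (C$$(l,k)))
       + (if i = k then \<kappa>^2 * a i + (if i = j then 0 else \<kappa>^4 * b i) else 0)))
     + w * ((if i = j then -(\<kappa>^4) else 0) * (if k = j then 1 else 0))"
    unfolding sys_entry[OF B C ik] by (auto simp: algebra_simps)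
qed

lemma vertex_exists:
  assumes B: "B \<in> carrier_mat n m" and C: "C \<in> carrier_mat m n"
    and bd: "\<forall>j<m. Dlo j \<le> d j \<and> d j \<le> Dhi j"
    and ba: "\<forall>i<n. alo i \<le> a i \<and> a i \<le> ahi i" and bb: "\<forall>i<n. blo i \<le> b i \<and> b i \<le> bhi i"
  shows "\<exists>d' a' b'. (\<forall>j<m. d' j \<in> {Dlo j, Dhi j}) \<and> (\<forall>i<n. a' i \<in> {alo i, ahi i} \<and> b' i \<in> {blo i, bhi i})
           \<and> Fv B C n m \<kappa> d' a' b' \<le> Fv B C n m \<kappa> d a b"
    and "\<exists>d' a' b'. (\<forall>j<m. d' j \<in> {Dlo j, Dhi j}) \<and> (\<forall>i<n. a' i \<in> {alo i, ahi i} \<and> b' i \<in> {blo i, bhi i})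
           \<and> Fv B C n m \<kappa> d' a' b' \<ge> Fv B C n m \<kappa> d a b"
proof -
  obtain d1 where d1: "\<forall>j<m. d1 j \<in> {Dlo j, Dhi j}" "Fv B C n m \<kappa> d1 a b \<le> Fv B C n m \<kappa> d a b"
    using vertex_min[where G = "\<lambda>d. Fv B C n m \<kappa> d a b", OF aff_d[OF B C] bd] by blast
  obtain a1 where a1: "\<forall>j<n. a1 j \<in> {alo j, ahi j}" "Fv B C n m \<kappa> d1 a1 b \<le> Fv B C n m \<kappa> d1 a b"
    using vertex_min[where G = "\<lambda>a. Fv B C n m \<kappa> d1 a b", OF aff_a[OF B C] ba] by blast
  obtain b1 where b1: "\<forall>j<n. b1 j \<in> {blo j, bhi j}" "Fv B C n m \<kappa> d1 a1 b1 \<le> Fv B C n m \<kappa> d1 a1 b"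
    using vertex_min[where G = "\<lambda>b. Fv B C n m \<kappa> d1 a1 b", OF aff_b[OF B C] bb] by blast
  show "\<exists>d' a' b'. (\<forall>j<m. d' j \<in> {Dlo j, Dhi j}) \<and> (\<forall>i<n. a' i \<in> {alo i, ahi i} \<and> b' i \<in> {blo i, bhi i})
           \<and> Fv B C n m \<kappa> d' a' b' \<le> Fv B C n m \<kappa> d a b"
    using d1 a1 b1 by (intro exI[of _ d1] exI[of _ a1] exI[of _ b1]) auto
  obtain d2 where d2: "\<forall>j<m. d2 j \<in> {Dlo j, Dhi j}" "Fv B C n m \<kappa> d2 a b \<ge> Fv B C n m \<kappa> d a b"
    using vertex_max[where G = "\<lambda>d. Fv B C n m \<kappa> d a b", OF aff_d[OF B C] bd] by blast
  obtain a2 where a2: "\<forall>j<n. a2 j \<in> {alo j, ahi j}" "Fv B C n m \<kappa> d2 a2 b \<ge> Fv B C n m \<kappa> d2 a b"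
    using vertex_max[where G = "\<lambda>a. Fv B C n m \<kappa> d2 a b", OF aff_a[OF B C] ba] by blast
  obtain b2 where b2: "\<forall>j<n. b2 j \<in> {blo j, bhi j}" "Fv B C n m \<kappa> d2 a2 b2 \<ge> Fv B C n m \<kappa> d2 a2 b"
    using vertex_max[where G = "\<lambda>b. Fv B C n m \<kappa> d2 a2 b", OF aff_b[OF B C] bb] by blast
  show "\<exists>d' a' b'. (\<forall>j<m. d' j \<in> {Dlo j, Dhi j}) \<and> (\<forall>i<n. a' i \<in> {alo i, ahi i} \<and> b' i \<in> {blo i, bhi i})
           \<and> Fv B C n m \<kappa> d' a' b' \<ge> Fv B C n m \<kappa> d a b"
    using d2 a2 b2 by (intro exI[of _ d2] exI[of _ a2] exI[of _ b2]) auto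
qed

lemma mat_diag_cong: "(\<And>j. j < n \<Longrightarrow> f j = g j) \<Longrightarrow> mat_diag n f = mat_diag n g"
  unfolding mat_diag_def by (intro eq_matI) auto

lemma finite_vertD: "finite (vertD m Dlo Dhi)"
proof -
  have "vertD m Dlo Dhi \<subseteq> (\<lambda>d. mat_diag m d) ` (PiE {..<m} (\<lambda>j. {Dlo j, Dhi j}))"
  proof
    fix D assume "D \<in> vertD m Dlo Dhi"
    then obtain d where d: "D = mat_diag m d" "\<forall>j<m. d j \<in> {Dlo j, Dhi j}" unfolding vertD_def by blast
    have "D = mat_diag m (restrict d {..<m})" unfolding d(1) by (rule mat_diag_cong) simp
    moreover have "restrict d {..<m} \<in> PiE {..<m} (\<lambda>j. {Dlo j, Dhi j})" using d(2) by auto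
    ultimately show "D \<in> (\<lambda>d. mat_diag m d) ` (PiE {..<m} (\<lambda>j. {Dlo j, Dhi j}))" by blast
  qed
  moreover have "finite (PiE {..<m} (\<lambda>j. {Dlo j, Dhi j}))" by (rule finite_PiE) auto
  ultimately show ?thesis by (rule finite_subset[OF _ finite_imageI])
qed

lemma finite_vertJ: "finite (vertJ n alo ahi blo bhi)"
proof -
  let ?PA = "PiE {..<n} (\<lambda>i. {alo i, ahi i})" and ?PB = "PiE {..<n} (\<lambda>i. {blo i, bhi i})"
  have "vertJ n alo ahi blo bhi \<subseteq> (\<lambda>(a,b). (mat_diag n a, mat_diag n b)) ` (?PA \<times> ?PB)"
  proof
    fix J assume "J \<in> vertJ n alo ahi blo bhi"
    then obtain a b where ab: "J = (mat_diag n a, mat_diag n b)" "\<forall>i<n. a i \<in> {alo i, ahi i} \<and> b i \<in> {blo i, bhi i}"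
      unfolding vertJ_def by blast
    have "J = (mat_diag n (restrict a {..<n}), mat_diag n (restrict b {..<n}))"
      unfolding ab(1) by (auto intro!: mat_diag_cong)
    moreover have "(restrict a {..<n}, restrict b {..<n}) \<in> ?PA \<times> ?PB" using ab(2) by auto
    ultimately show "J \<in> (\<lambda>(a,b). (mat_diag n a, mat_diag n b)) ` (?PA \<times> ?PB)"
      by (intro rev_image_eqI[of "(restrict a {..<n}, restrict b {..<n})"]) auto
  qed
  moreover have "finite (?PA \<times> ?PB)" by (intro finite_cartesian_product finite_PiE) auto
  ultimately show ?thesis by (rule finite_subset[OF _ finite_imageI])
qed

lemma finite_detvals:
  assumes "finite Ds" "finite Js" shows "finite (detvals B C Ds Js \<kappa>)"
proof -
  have "detvals B C Ds Js \<kappa> \<subseteq> (\<lambda>(\<Delta>, J). det (- sysmat B C \<Delta> (fst J) (snd J) \<kappa>)) ` (Ds \<times> Js)"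
  proof
    fix v assume "v \<in> detvals B C Ds Js \<kappa>"
    then obtain \<Delta> J2 J4 where v: "v = det (- sysmat B C \<Delta> J2 J4 \<kappa>)" "\<Delta> \<in> Ds" "(J2, J4) \<in> Js"
      unfolding detvals_def by blast
    show "v \<in> (\<lambda>(\<Delta>, J). det (- sysmat B C \<Delta> (fst J) (snd J) \<kappa>)) ` (Ds \<times> Js)"
      by (rule rev_image_eqI[of "(\<Delta>, (J2, J4))"]) (use v in auto)
  qed
  moreover have "finite ((\<lambda>(\<Delta>, J). det (- sysmat B C \<Delta> (fst J) (snd J) \<kappa>)) ` (Ds \<times> Js))"
    using assms by simp
  ultimately show ?thesis by (rule finite_subset)
qed

lemma poly_sign_right: fixes P :: "real poly"
  shows "eventually (\<lambda>x. poly P x > 0) (at_right 0) \<or> eventually (\<lambda>x. poly P x \<le> 0) (at_right 0)"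
proof (cases "P = 0")
  case True thus ?thesis by simp
next
  case False
  define Z where "Z = {x. poly P x = 0 \<and> 0 < x}"
  have finZ: "finite Z" unfolding Z_def using poly_roots_finite[OF False] by (rule rev_finite_subset) auto
  define e where "e = (if Z = {} then 1 else Min Z)"
  have e0: "e > 0" unfolding e_def using finZ by (auto simp: Z_def)
  have nz: "poly P x \<noteq> 0" if "0 < x" "x < e" for x
  proof
    assume "poly P x = 0"
    hence xZ: "x \<in> Z" unfolding Z_def using that by simp
    hence "e \<le> x" unfolding e_def using finZ by (auto intro: Min_le)
    thus False using that by simp
  qed
  have h: "0 < e/2" "e/2 < e" using e0 by auto
  show ?thesis
  proof (cases "poly P (e/2) > 0")
    case True
    have "\<forall>x. 0 < x \<and> x < e \<longrightarrow> poly P x > 0"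
    proof (intro allI impI, rule ccontr)
      fix x assume x: "0 < x \<and> x < e" and "\<not> poly P x > 0"
      hence neg: "poly P x < 0" using nz by force
      show False
      proof (cases "x < e/2")
        case True
        have "poly P x * poly P (e/2) < 0" using neg \<open>poly P (e/2) > 0\<close> by (simp add: mult_neg_pos)
        from poly_IVT[OF True this] obtain y where "x < y" "y < e/2" "poly P y = 0" by auto
        thus False using nz x by auto
      next
        case False
        hence "e/2 < x" using neg True by (cases "x = e/2") auto
        moreover have "poly P (e/2) * poly P x < 0" using neg \<open>poly P (e/2) > 0\<close> by (simp add: mult_pos_neg)
        ultimately obtain y where "e/2 < y" "y < x" "poly P y = 0" using poly_IVT by blast
        thus False using nz x h by auto
      qed
    qed
    hence "eventually (\<lambda>x. poly P x > 0) (at_right 0)" unfolding eventually_at_right_field using e0 by blast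
    thus ?thesis ..
  next
    case False
    hence neg2: "poly P (e/2) < 0" using nz[OF h] by force
    have "\<forall>x. 0 < x \<and> x < e \<longrightarrow> poly P x \<le> 0"
    proof (intro allI impI, rule ccontr)
      fix x assume x: "0 < x \<and> x < e" and "\<not> poly P x \<le> 0"
      hence pos: "poly P x > 0" by simp
      show False
      proof (cases "x < e/2")
        case True
        have "poly P x * poly P (e/2) < 0" using pos neg2 by (simp add: mult_pos_neg)
        from poly_IVT[OF True this] obtain y where "x < y" "y < e/2" "poly P y = 0" by auto
        thus False using nz x by auto
      next
        case False
        hence "e/2 < x" using pos neg2 by (cases "x = e/2") auto
        moreover have "poly P (e/2) * poly P x < 0" using pos neg2 by (simp add: mult_neg_pos)
        ultimately obtain y where "e/2 < y" "y < x" "poly P y = 0" using poly_IVT by blast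
        thus False using nz x h by auto
      qed
    qed
    hence "eventually (\<lambda>x. poly P x \<le> 0) (at_right 0)" unfolding eventually_at_right_field using e0 by blast
    thus ?thesis ..
  qed
qed

context
  fixes n m :: nat and B C :: "int mat" and Dlo Dhi alo ahi blo bhi :: "nat \<Rightarrow> real"
  assumes n1: "n \<ge> 1" and Bc: "B \<in> carrier_mat n m" and Cc: "C \<in> carrier_mat m n"
    and Dbox: "\<forall>j<m. 0 \<le> Dlo j \<and> Dlo j \<le> Dhi j" and Jbox: "\<forall>i<n. alo i \<le> ahi i \<and> blo i \<le> bhi i"
    and HA1: "A1 n m B C (boxD m Dlo Dhi)" and HA2: "\<forall>(J2, J4)\<in>boxJ n alo ahi blo bhi. A2 n J2 J4"
begin

lemma param_facts:
  assumes D: "\<Delta> \<in> boxD m Dlo Dhi" and J: "(J2, J4) \<in> boxJ n alo ahi blo bhi"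
  shows "\<Delta> \<in> carrier_mat m m" "J2 \<in> carrier_mat n n" "J4 \<in> carrier_mat n n"
    "\<exists>a b. J2 = mat_diag n a \<and> J4 = mat_diag n b \<and> A2 n (mat_diag n a) (mat_diag n b)"
    "sysmat B C \<Delta> J2 J4 \<kappa> \<in> carrier_mat n n"
proof -
  from D obtain d where d: "\<Delta> = mat_diag m d" unfolding boxD_def by blast
  from J obtain a b where ab: "J2 = mat_diag n a" "J4 = mat_diag n b" unfolding boxJ_def by blast
  show c1: "\<Delta> \<in> carrier_mat m m" using d by simp
  show c2: "J2 \<in> carrier_mat n n" using ab by simp
  show c3: "J4 \<in> carrier_mat n n" using ab by simp
  have "A2 n J2 J4" using HA2 J by blast
  thus "\<exists>a b. J2 = mat_diag n a \<and> J4 = mat_diag n b \<and> A2 n (mat_diag n a) (mat_diag n b)"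
    using ab by blast
  show "sysmat B C \<Delta> J2 J4 \<kappa> \<in> carrier_mat n n" by (rule sysmat_carrier[OF Bc Cc c1 c2 c3])
qed

lemma micro_suff:
  assumes D: "\<Delta> \<in> boxD m Dlo Dhi" and J: "(J2, J4) \<in> boxJ n alo ahi blo bhi"
    and e: "e > 0" and pos: "\<forall>\<kappa>. 0 < \<kappa> \<and> \<kappa> < e \<longrightarrow> det (- sysmat B C \<Delta> J2 J4 \<kappa>) > 0"
    and k2: "k2 \<ge> 0" "det (- sysmat B C \<Delta> J2 J4 k2) < 0"
  shows "microphase B C \<Delta> J2 J4"
proof -
  note pf = param_facts[OF D J]
  define A where "A = map_mat real_of_int B * \<Delta> * map_mat real_of_int C"
  have Ac: "A \<in> carrier_mat n n" unfolding A_def using Bc Cc pf(1) by simp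
  have sys: "sysmat B C \<Delta> J2 J4 \<kappa> = A + \<kappa>^2 \<cdot>\<^sub>m J2 + \<kappa>^4 \<cdot>\<^sub>m J4" for \<kappa>
    unfolding sysmat_def A_def ..
  have "det A = 0 \<and> (\<Sum>z\<in>{z. ceig A z \<and> Re z < 0}. alg_mult A z) = n - 1"
    using HA1 D unfolding A1_def A_def Let_def by blast
  then obtain r i0 where r: "\<forall>z. poly (cpc A) z = (\<Prod>i<n. z - r i)" and i0: "i0 < n" "r i0 = 0"
    and neg: "\<forall>i<n. i \<noteq> i0 \<longrightarrow> Re (r i) < 0" and dA: "det A = 0"
    using A1_roots[OF Ac] by blast
  obtain kh0 where kh0: "kh0 > 0" and small: "\<forall>\<kappa>. 0 < \<kappa> \<and> \<kappa> < kh0 \<and> det (- (A + \<kappa>^2 \<cdot>\<^sub>m J2 + \<kappa>^4 \<cdot>\<^sub>m J4)) > 0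
           \<longrightarrow> spectral_abscissa (A + \<kappa>^2 \<cdot>\<^sub>m J2 + \<kappa>^4 \<cdot>\<^sub>m J4) < 0"
    using small_kappa[OF Ac pf(2) pf(3) n1 r i0 neg] by blast
  obtain a b where ab: "J2 = mat_diag n a" "J4 = mat_diag n b" "A2 n (mat_diag n a) (mat_diag n b)"
    using pf(4) by blast
  obtain K where K: "\<forall>\<kappa>\<ge>K. spectral_abscissa (A + \<kappa>^2 \<cdot>\<^sub>m mat_diag n a + \<kappa>^4 \<cdot>\<^sub>m mat_diag n b) < 0"
    using large_kappa[OF Ac n1 ab(3)] by blast
  define kh where "kh = min kh0 (e/2)"
  have kh: "kh > 0" unfolding kh_def using kh0 e by simp
  have neg_small: "\<forall>\<kappa>. 0 < \<kappa> \<and> \<kappa> < kh \<longrightarrow> rho B C \<Delta> J2 J4 \<kappa> < 0"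
  proof (intro allI impI)
    fix \<kappa> :: real assume k: "0 < \<kappa> \<and> \<kappa> < kh"
    have "det (- sysmat B C \<Delta> J2 J4 \<kappa>) > 0" using pos k unfolding kh_def by auto
    thus "rho B C \<Delta> J2 J4 \<kappa> < 0" unfolding rho_def sys using small k unfolding kh_def by auto
  qed
  have "det (- sysmat B C \<Delta> J2 J4 0) = 0" unfolding sys by (rule det_at0[OF Ac pf(2) pf(3) dA])
  hence "k2 \<noteq> 0" using k2 by auto
  have "k2 \<ge> e"
  proof (rule ccontr)
    assume "\<not> e \<le> k2"
    hence "0 < k2 \<and> k2 < e" using k2(1) \<open>k2 \<noteq> 0\<close> by auto
    thus False using pos k2(2) by force
  qed
  hence k2kh: "kh < k2" unfolding kh_def using e by simp
  have r2: "rho B C \<Delta> J2 J4 k2 > 0" unfolding rho_def by (rule L1[OF pf(5) n1 k2(2)])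
  define k3 where "k3 = max K (k2 + 1)"
  have r3: "rho B C \<Delta> J2 J4 k3 < 0" unfolding rho_def sys unfolding ab(1,2) using K unfolding k3_def by simp
  show ?thesis unfolding microphase_def
    using kh neg_small k2kh r2 r3 unfolding k3_def by (intro exI[of _ kh] conjI exI[of _ k2] exI[of _ "max K (k2+1)"]) auto
qed

lemma micro_nec:
  assumes D: "\<Delta> \<in> boxD m Dlo Dhi" and J: "(J2, J4) \<in> boxJ n alo ahi blo bhi"
    and mp: "microphase B C \<Delta> J2 J4"
  shows "\<exists>e>0. \<forall>\<kappa>. 0 < \<kappa> \<and> \<kappa> < e \<longrightarrow> det (- sysmat B C \<Delta> J2 J4 \<kappa>) > 0"
proof -
  from mp obtain kh where kh: "kh > 0" "\<forall>\<kappa>. 0 < \<kappa> \<and> \<kappa> < kh \<longrightarrow> rho B C \<Delta> J2 J4 \<kappa> < 0"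
    unfolding microphase_def by blast
  show ?thesis
    using kh L2[OF param_facts(5)[OF D J] n1] unfolding rho_def by blast
qed

end

context
  fixes n m :: nat and B C :: "int mat" and Dlo Dhi alo ahi blo bhi :: "nat \<Rightarrow> real"
  assumes Bc: "B \<in> carrier_mat n m" and Cc: "C \<in> carrier_mat m n"
    and Dbox: "\<forall>j<m. 0 \<le> Dlo j \<and> Dlo j \<le> Dhi j" and Jbox: "\<forall>i<n. alo i \<le> ahi i \<and> blo i \<le> bhi i"
begin

lemma vert_subD: "vertD m Dlo Dhi \<subseteq> boxD m Dlo Dhi"
proof
  fix D assume "D \<in> vertD m Dlo Dhi"
  then obtain d where d: "D = mat_diag m d" "\<forall>j<m. d j \<in> {Dlo j, Dhi j}" unfolding vertD_def by blast
  have "\<forall>j<m. Dlo j \<le> d j \<and> d j \<le> Dhi j" using d(2) Dbox by force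
  thus "D \<in> boxD m Dlo Dhi" unfolding boxD_def using d(1) by blast
qed

lemma vert_subJ: "vertJ n alo ahi blo bhi \<subseteq> boxJ n alo ahi blo bhi"
proof
  fix J assume "J \<in> vertJ n alo ahi blo bhi"
  then obtain a b where ab: "J = (mat_diag n a, mat_diag n b)" "\<forall>i<n. a i \<in> {alo i, ahi i} \<and> b i \<in> {blo i, bhi i}"
    unfolding vertJ_def by blast
  have "\<forall>i<n. alo i \<le> a i \<and> a i \<le> ahi i \<and> blo i \<le> b i \<and> b i \<le> bhi i" using ab(2) Jbox by force
  thus "J \<in> boxJ n alo ahi blo bhi" unfolding boxJ_def using ab(1) by blast
qed

lemma bounds:
  shows "finite (detvals B C (vertD m Dlo Dhi) (vertJ n alo ahi blo bhi) \<kappa>)"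
    and "detvals B C (vertD m Dlo Dhi) (vertJ n alo ahi blo bhi) \<kappa> \<noteq> {}"
    and "detvals B C (vertD m Dlo Dhi) (vertJ n alo ahi blo bhi) \<kappa> \<subseteq> detvals B C (boxD m Dlo Dhi) (boxJ n alo ahi blo bhi) \<kappa>"
    and "\<forall>x\<in>detvals B C (boxD m Dlo Dhi) (boxJ n alo ahi blo bhi) \<kappa>.
           Min (detvals B C (vertD m Dlo Dhi) (vertJ n alo ahi blo bhi) \<kappa>) \<le> x \<and>
           x \<le> Max (detvals B C (vertD m Dlo Dhi) (vertJ n alo ahi blo bhi) \<kappa>)"
proof -
  let ?V = "detvals B C (vertD m Dlo Dhi) (vertJ n alo ahi blo bhi) \<kappa>"
  let ?S = "detvals B C (boxD m Dlo Dhi) (boxJ n alo ahi blo bhi) \<kappa>"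
  show fin: "finite ?V" by (rule finite_detvals[OF finite_vertD finite_vertJ])
  have "mat_diag m Dlo \<in> vertD m Dlo Dhi" unfolding vertD_def by blast
  moreover have "(mat_diag n alo, mat_diag n blo) \<in> vertJ n alo ahi blo bhi" unfolding vertJ_def by blast
  ultimately show "?V \<noteq> {}" unfolding detvals_def by blast
  show sub: "?V \<subseteq> ?S" unfolding detvals_def using vert_subD vert_subJ by blast
  have inV: "Fv B C n m \<kappa> d a b \<in> ?V" if "\<forall>j<m. d j \<in> {Dlo j, Dhi j}"
    "\<forall>i<n. a i \<in> {alo i, ahi i} \<and> b i \<in> {blo i, bhi i}" for d a b
  proof -
    have "mat_diag m d \<in> vertD m Dlo Dhi" unfolding vertD_def using that by blast
    moreover have "(mat_diag n a, mat_diag n b) \<in> vertJ n alo ahi blo bhi" unfolding vertJ_def using that by blast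
    ultimately show ?thesis unfolding detvals_def Fv_def by blast
  qed
  show "\<forall>x\<in>?S. Min ?V \<le> x \<and> x \<le> Max ?V"
  proof
    fix x assume "x \<in> ?S"
    then obtain \<Delta> J2 J4 where x: "x = det (- sysmat B C \<Delta> J2 J4 \<kappa>)" "\<Delta> \<in> boxD m Dlo Dhi"
      "(J2, J4) \<in> boxJ n alo ahi blo bhi" unfolding detvals_def by blast
    from x(2) obtain d where d: "\<Delta> = mat_diag m d" "\<forall>j<m. Dlo j \<le> d j \<and> d j \<le> Dhi j"
      unfolding boxD_def by blast
    from x(3) obtain a b where ab: "J2 = mat_diag n a" "J4 = mat_diag n b"
      "\<forall>i<n. alo i \<le> a i \<and> a i \<le> ahi i \<and> blo i \<le> b i \<and> b i \<le> bhi i"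
      unfolding boxJ_def by blast
    have xF: "x = Fv B C n m \<kappa> d a b" unfolding x(1) d(1) ab(1,2) Fv_def ..
    have ba: "\<forall>i<n. alo i \<le> a i \<and> a i \<le> ahi i" and bb: "\<forall>i<n. blo i \<le> b i \<and> b i \<le> bhi i"
      using ab(3) by auto
    obtain d1 a1 b1 where v1: "\<forall>j<m. d1 j \<in> {Dlo j, Dhi j}" "\<forall>i<n. a1 i \<in> {alo i, ahi i} \<and> b1 i \<in> {blo i, bhi i}"
      "Fv B C n m \<kappa> d1 a1 b1 \<le> Fv B C n m \<kappa> d a b"
      using vertex_exists(1)[OF Bc Cc d(2) ba bb] by blast
    obtain d2 a2 b2 where v2: "\<forall>j<m. d2 j \<in> {Dlo j, Dhi j}" "\<forall>i<n. a2 i \<in> {alo i, ahi i} \<and> b2 i \<in> {blo i, bhi i}"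
      "Fv B C n m \<kappa> d2 a2 b2 \<ge> Fv B C n m \<kappa> d a b"
      using vertex_exists(2)[OF Bc Cc d(2) ba bb] by blast
    have "Min ?V \<le> Fv B C n m \<kappa> d1 a1 b1" by (rule Min_le[OF fin inV[OF v1(1,2)]])
    moreover have "Fv B C n m \<kappa> d2 a2 b2 \<le> Max ?V" by (rule Max_ge[OF fin inV[OF v2(1,2)]])
    ultimately show "Min ?V \<le> x \<and> x \<le> Max ?V" using v1(3) v2(3) xF by linarith
  qed
qed

lemma Psi_eqs:
  shows "Psi_minus B C (boxD m Dlo Dhi) (boxJ n alo ahi blo bhi) \<kappa> = Min (detvals B C (vertD m Dlo Dhi) (vertJ n alo ahi blo bhi) \<kappa>)"
    and "Psi_plus B C (boxD m Dlo Dhi) (boxJ n alo ahi blo bhi) \<kappa> = Max (detvals B C (vertD m Dlo Dhi) (vertJ n alo ahi blo bhi) \<kappa>)"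
proof -
  note b = bounds[of \<kappa>]
  show "Psi_minus B C (boxD m Dlo Dhi) (boxJ n alo ahi blo bhi) \<kappa> = Min (detvals B C (vertD m Dlo Dhi) (vertJ n alo ahi blo bhi) \<kappa>)"
    unfolding Psi_minus_def by (rule cInf_eq_minimum) (use b Min_in[OF b(1) b(2)] in blast)+
  show "Psi_plus B C (boxD m Dlo Dhi) (boxJ n alo ahi blo bhi) \<kappa> = Max (detvals B C (vertD m Dlo Dhi) (vertJ n alo ahi blo bhi) \<kappa>)"
    unfolding Psi_plus_def by (rule cSup_eq_maximum) (use b Max_in[OF b(1) b(2)] in blast)+
qed

lemma Psi_bounds:
  assumes "\<Delta> \<in> boxD m Dlo Dhi" "(J2, J4) \<in> boxJ n alo ahi blo bhi"
  shows "Psi_minus B C (boxD m Dlo Dhi) (boxJ n alo ahi blo bhi) \<kappa> \<le> det (- sysmat B C \<Delta> J2 J4 \<kappa>)"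
    and "det (- sysmat B C \<Delta> J2 J4 \<kappa>) \<le> Psi_plus B C (boxD m Dlo Dhi) (boxJ n alo ahi blo bhi) \<kappa>"
proof -
  have x: "det (- sysmat B C \<Delta> J2 J4 \<kappa>) \<in> detvals B C (boxD m Dlo Dhi) (boxJ n alo ahi blo bhi) \<kappa>"
    unfolding detvals_def using assms by blast
  show "Psi_minus B C (boxD m Dlo Dhi) (boxJ n alo ahi blo bhi) \<kappa> \<le> det (- sysmat B C \<Delta> J2 J4 \<kappa>)"
    unfolding Psi_eqs using bounds(4)[of \<kappa>] x by blast
  show "det (- sysmat B C \<Delta> J2 J4 \<kappa>) \<le> Psi_plus B C (boxD m Dlo Dhi) (boxJ n alo ahi blo bhi) \<kappa>"
    unfolding Psi_eqs using bounds(4)[of \<kappa>] x by blast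
qed

lemma Psi_attained:
  shows "\<exists>\<Delta> J2 J4. \<Delta> \<in> vertD m Dlo Dhi \<and> (J2, J4) \<in> vertJ n alo ahi blo bhi \<and>
            det (- sysmat B C \<Delta> J2 J4 \<kappa>) = Psi_minus B C (boxD m Dlo Dhi) (boxJ n alo ahi blo bhi) \<kappa>"
    and "\<exists>\<Delta> J2 J4. \<Delta> \<in> vertD m Dlo Dhi \<and> (J2, J4) \<in> vertJ n alo ahi blo bhi \<and>
            det (- sysmat B C \<Delta> J2 J4 \<kappa>) = Psi_plus B C (boxD m Dlo Dhi) (boxJ n alo ahi blo bhi) \<kappa>"
proof -
  note b = bounds[of \<kappa>]
  define mV where "mV = Min (detvals B C (vertD m Dlo Dhi) (vertJ n alo ahi blo bhi) \<kappa>)"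
  define MV where "MV = Max (detvals B C (vertD m Dlo Dhi) (vertJ n alo ahi blo bhi) \<kappa>)"
  have "mV \<in> detvals B C (vertD m Dlo Dhi) (vertJ n alo ahi blo bhi) \<kappa>"
    unfolding mV_def by (rule Min_in[OF b(1) b(2)])
  hence "\<exists>\<Delta> J2 J4. \<Delta> \<in> vertD m Dlo Dhi \<and> (J2, J4) \<in> vertJ n alo ahi blo bhi \<and>
            det (- sysmat B C \<Delta> J2 J4 \<kappa>) = mV" unfolding detvals_def by blast
  thus "\<exists>\<Delta> J2 J4. \<Delta> \<in> vertD m Dlo Dhi \<and> (J2, J4) \<in> vertJ n alo ahi blo bhi \<and>
            det (- sysmat B C \<Delta> J2 J4 \<kappa>) = Psi_minus B C (boxD m Dlo Dhi) (boxJ n alo ahi blo bhi) \<kappa>"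
    unfolding Psi_eqs mV_def .
  have "MV \<in> detvals B C (vertD m Dlo Dhi) (vertJ n alo ahi blo bhi) \<kappa>"
    unfolding MV_def by (rule Max_in[OF b(1) b(2)])
  hence "\<exists>\<Delta> J2 J4. \<Delta> \<in> vertD m Dlo Dhi \<and> (J2, J4) \<in> vertJ n alo ahi blo bhi \<and>
            det (- sysmat B C \<Delta> J2 J4 \<kappa>) = MV" unfolding detvals_def by blast
  thus "\<exists>\<Delta> J2 J4. \<Delta> \<in> vertD m Dlo Dhi \<and> (J2, J4) \<in> vertJ n alo ahi blo bhi \<and>
            det (- sysmat B C \<Delta> J2 J4 \<kappa>) = Psi_plus B C (boxD m Dlo Dhi) (boxJ n alo ahi blo bhi) \<kappa>"
    unfolding Psi_eqs MV_def .
qed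

end

theorem corollary1:
  fixes n m :: nat and B C :: "int mat"
    and Dlo Dhi :: "nat \<Rightarrow> real" and alo ahi blo bhi :: "nat \<Rightarrow> real"
  defines "Ds \<equiv> boxD m Dlo Dhi" and "Js \<equiv> boxJ n alo ahi blo bhi"
  assumes "n \<ge> 1" and "m \<ge> 1"
    and "B \<in> carrier_mat n m" and "C \<in> carrier_mat m n"
    and "\<forall>j<m. 0 \<le> Dlo j \<and> Dlo j \<le> Dhi j"
    and "\<forall>i<n. alo i \<le> ahi i \<and> blo i \<le> bhi i"
    and "A1 n m B C Ds"
    and "\<forall>(J2, J4)\<in>Js. A2 n J2 J4"
  shows
    "((\<exists>\<Delta>\<in>Ds. \<exists>(J2, J4)\<in>Js. microphase B C \<Delta> J2 J4)
        \<longrightarrow> initially_positive (Psi_plus B C Ds Js)) \<and>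
     ((initially_positive (Psi_minus B C Ds Js) \<and> neg_sign_change (Psi_minus B C Ds Js)) \<or>
      (initially_positive (Psi_plus B C Ds Js) \<and> neg_sign_change (Psi_plus B C Ds Js))
        \<longrightarrow> (\<exists>\<Delta>\<in>Ds. \<exists>(J2, J4)\<in>Js. microphase B C \<Delta> J2 J4)) \<and>
     (initially_positive (Psi_minus B C Ds Js) \<and> neg_sign_change (Psi_plus B C Ds Js)
        \<longrightarrow> (\<forall>\<Delta>\<in>Ds. \<forall>(J2, J4)\<in>Js. microphase B C \<Delta> J2 J4)) \<and>
     (\<forall>\<kappa>\<ge>0.
        Psi_minus B C Ds Js \<kappa> = Min (detvals B C (vertD m Dlo Dhi) (vertJ n alo ahi blo bhi) \<kappa>) \<and>
        Psi_plus B C Ds Js \<kappa> = Max (detvals B C (vertD m Dlo Dhi) (vertJ n alo ahi blo bhi) \<kappa>))"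
proof -
  have HA1: "A1 n m B C (boxD m Dlo Dhi)" using assms(9) unfolding Ds_def .
  have HA2: "\<forall>(J2, J4)\<in>boxJ n alo ahi blo bhi. A2 n J2 J4" using assms(10) unfolding Js_def .
  note MS = micro_suff[OF assms(3) assms(5) assms(6) assms(7) assms(8) HA1 HA2]
  note MN = micro_nec[OF assms(3) assms(5) assms(6) assms(7) assms(8) HA1 HA2]
  note PB = Psi_bounds[OF assms(5) assms(6) assms(7) assms(8)]
  note PA = Psi_attained[OF assms(5) assms(6) assms(7) assms(8)]
  note PE = Psi_eqs[OF assms(5) assms(6) assms(7) assms(8)]
  note VD = vert_subD[OF assms(5) assms(6) assms(7) assms(8)]
  note VJ = vert_subJ[OF assms(5) assms(6) assms(7) assms(8)]
  note PF = param_facts[OF assms(3) assms(5) assms(6) assms(7) assms(8) HA1 HA2]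
  let ?D = "boxD m Dlo Dhi" and ?J = "boxJ n alo ahi blo bhi"
  let ?Pm = "Psi_minus B C ?D ?J" and ?Pp = "Psi_plus B C ?D ?J"
  have I: "(\<exists>\<Delta>\<in>?D. \<exists>(J2, J4)\<in>?J. microphase B C \<Delta> J2 J4) \<longrightarrow> initially_positive ?Pp"
  proof
    assume "\<exists>\<Delta>\<in>?D. \<exists>(J2, J4)\<in>?J. microphase B C \<Delta> J2 J4"
    then obtain \<Delta> J2 J4 where h: "\<Delta> \<in> ?D" "(J2, J4) \<in> ?J" "microphase B C \<Delta> J2 J4" by blast
    obtain e where e: "e > 0" "\<forall>\<kappa>. 0 < \<kappa> \<and> \<kappa> < e \<longrightarrow> det (- sysmat B C \<Delta> J2 J4 \<kappa>) > 0"
      using MN[OF h] by blast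
    show "initially_positive ?Pp" unfolding initially_positive_def
    proof (intro exI[of _ e] conjI allI impI e(1))
      fix \<kappa> :: real assume k: "0 < \<kappa> \<and> \<kappa> < e"
      show "?Pp \<kappa> > 0" using e(2) k PB(2)[OF h(1,2), of \<kappa>] by force
    qed
  qed
  have IIm: "initially_positive ?Pm \<and> neg_sign_change ?Pm \<longrightarrow> (\<exists>\<Delta>\<in>?D. \<exists>(J2, J4)\<in>?J. microphase B C \<Delta> J2 J4)"
  proof
    assume "initially_positive ?Pm \<and> neg_sign_change ?Pm"
    then obtain k k1 k2 where k: "k > 0" "\<forall>\<kappa>. 0 < \<kappa> \<and> \<kappa> < k \<longrightarrow> ?Pm \<kappa> > 0"
      and kk: "0 \<le> k1" "k1 < k2" "?Pm k2 < 0"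
      unfolding initially_positive_def neg_sign_change_def by blast
    obtain \<Delta> J2 J4 where v: "\<Delta> \<in> vertD m Dlo Dhi" "(J2, J4) \<in> vertJ n alo ahi blo bhi"
      "det (- sysmat B C \<Delta> J2 J4 k2) = ?Pm k2" using PA(1)[of k2] by blast
    have vb: "\<Delta> \<in> ?D" "(J2, J4) \<in> ?J" using v VD VJ by auto
    have "microphase B C \<Delta> J2 J4"
    proof (rule MS[OF vb k(1)])
      show "\<forall>\<kappa>. 0 < \<kappa> \<and> \<kappa> < k \<longrightarrow> 0 < det (- sysmat B C \<Delta> J2 J4 \<kappa>)"
        using k(2) PB(1)[OF vb] by (meson less_le_trans)
      show "0 \<le> k2" using kk by simp
      show "det (- sysmat B C \<Delta> J2 J4 k2) < 0" using v(3) kk by simp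
    qed
    thus "\<exists>\<Delta>\<in>?D. \<exists>(J2, J4)\<in>?J. microphase B C \<Delta> J2 J4" using vb by blast
  qed
  have IIp: "initially_positive ?Pp \<and> neg_sign_change ?Pp \<longrightarrow> (\<exists>\<Delta>\<in>?D. \<exists>(J2, J4)\<in>?J. microphase B C \<Delta> J2 J4)"
  proof
    assume "initially_positive ?Pp \<and> neg_sign_change ?Pp"
    then obtain k k1 k2 where k: "k > 0" "\<forall>\<kappa>. 0 < \<kappa> \<and> \<kappa> < k \<longrightarrow> ?Pp \<kappa> > 0"
      and kk: "0 \<le> k1" "k1 < k2" "?Pp k2 < 0"
      unfolding initially_positive_def neg_sign_change_def by blast
    have ev: "eventually (\<lambda>\<kappa>. ?Pp \<kappa> > 0) (at_right 0)"
      unfolding eventually_at_right_field using k by blast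
    define W where "W = vertD m Dlo Dhi \<times> vertJ n alo ahi blo bhi"
    define f where "f w \<kappa> = det (- sysmat B C (fst w) (fst (snd w)) (snd (snd w)) \<kappa>)" for w \<kappa>
    have finW: "finite W" unfolding W_def using finite_vertD finite_vertJ by simp
    have Wbox: "fst w \<in> ?D" "(fst (snd w), snd (snd w)) \<in> ?J" if "w \<in> W" for w
      using that VD VJ unfolding W_def by auto
    have sgn: "eventually (\<lambda>\<kappa>. f w \<kappa> > 0) (at_right 0) \<or> eventually (\<lambda>\<kappa>. f w \<kappa> \<le> 0) (at_right 0)"
      if "w \<in> W" for w
    proof -
      note wb = Wbox[OF that]
      define A where "A = map_mat real_of_int B * fst w * map_mat real_of_int C"
      have Ac: "A \<in> carrier_mat n n" unfolding A_def using assms(5,6) PF(1)[OF wb] by simp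
      obtain P where P: "\<forall>\<kappa>. det (- (A + \<kappa>^2 \<cdot>\<^sub>m fst (snd w) + \<kappa>^4 \<cdot>\<^sub>m snd (snd w))) = poly P \<kappa>"
        using det_poly[OF Ac PF(2)[OF wb] PF(3)[OF wb]] by blast
      have "f w = poly P" unfolding f_def sysmat_def A_def[symmetric] using P by auto
      thus ?thesis using poly_sign_right[of P] by simp
    qed
    have "\<exists>w\<in>W. eventually (\<lambda>\<kappa>. f w \<kappa> > 0) (at_right 0)"
    proof (rule ccontr)
      assume "\<not> ?thesis"
      hence "\<forall>w\<in>W. eventually (\<lambda>\<kappa>. f w \<kappa> \<le> 0) (at_right 0)" using sgn by blast
      hence "eventually (\<lambda>\<kappa>. \<forall>w\<in>W. f w \<kappa> \<le> 0) (at_right 0)" by (rule eventually_ball_finite[OF finW])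
      hence "eventually (\<lambda>\<kappa>. ?Pp \<kappa> > 0 \<and> (\<forall>w\<in>W. f w \<kappa> \<le> 0)) (at_right 0)"
        using ev by (rule eventually_conj[rotated])
      then obtain \<kappa> where kap: "?Pp \<kappa> > 0" "\<forall>w\<in>W. f w \<kappa> \<le> 0"
        using eventually_happens'[OF trivial_limit_at_right_real] by blast
      obtain \<Delta> J2 J4 where v: "\<Delta> \<in> vertD m Dlo Dhi" "(J2, J4) \<in> vertJ n alo ahi blo bhi"
        "det (- sysmat B C \<Delta> J2 J4 \<kappa>) = ?Pp \<kappa>" using PA(2)[of \<kappa>] by blast
      have "(\<Delta>, J2, J4) \<in> W" unfolding W_def using v by simp
      hence "f (\<Delta>, J2, J4) \<kappa> \<le> 0" using kap by blast
      thus False using v(3) kap(1) unfolding f_def by simp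
    qed
    then obtain w where w: "w \<in> W" "eventually (\<lambda>\<kappa>. f w \<kappa> > 0) (at_right 0)" by blast
    then obtain e where e: "e > 0" "\<forall>\<kappa>>0. \<kappa> < e \<longrightarrow> f w \<kappa> > 0"
      unfolding eventually_at_right_field by blast
    note wb = Wbox[OF w(1)]
    have "microphase B C (fst w) (fst (snd w)) (snd (snd w))"
    proof (rule MS[OF wb e(1)])
      show "\<forall>\<kappa>. 0 < \<kappa> \<and> \<kappa> < e \<longrightarrow> 0 < det (- sysmat B C (fst w) (fst (snd w)) (snd (snd w)) \<kappa>)"
        using e(2) unfolding f_def by blast
      show "0 \<le> k2" using kk by simp
      show "det (- sysmat B C (fst w) (fst (snd w)) (snd (snd w)) k2) < 0"
        using PB(2)[OF wb, of k2] kk by simp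
    qed
    thus "\<exists>\<Delta>\<in>?D. \<exists>(J2, J4)\<in>?J. microphase B C \<Delta> J2 J4" using wb by blast
  qed
  have III: "initially_positive ?Pm \<and> neg_sign_change ?Pp \<longrightarrow> (\<forall>\<Delta>\<in>?D. \<forall>(J2, J4)\<in>?J. microphase B C \<Delta> J2 J4)"
  proof (intro impI ballI)
    assume "initially_positive ?Pm \<and> neg_sign_change ?Pp"
    then obtain k k1 k2 where k: "k > 0" "\<forall>\<kappa>. 0 < \<kappa> \<and> \<kappa> < k \<longrightarrow> ?Pm \<kappa> > 0"
      and kk: "0 \<le> k1" "k1 < k2" "?Pp k2 < 0"
      unfolding initially_positive_def neg_sign_change_def by blast
    fix \<Delta> J assume D: "\<Delta> \<in> ?D" and J: "J \<in> ?J"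
    obtain J2 J4 where J24: "J = (J2, J4)" by (cases J)
    have J': "(J2, J4) \<in> ?J" using J J24 by simp
    have "microphase B C \<Delta> J2 J4"
    proof (rule MS[OF D J' k(1)])
      show "\<forall>\<kappa>. 0 < \<kappa> \<and> \<kappa> < k \<longrightarrow> 0 < det (- sysmat B C \<Delta> J2 J4 \<kappa>)"
        using k(2) PB(1)[OF D J'] by (meson less_le_trans)
      show "0 \<le> k2" using kk by simp
      show "det (- sysmat B C \<Delta> J2 J4 k2) < 0" using PB(2)[OF D J', of k2] kk by simp
    qed
    thus "case J of (J2, J4) \<Rightarrow> microphase B C \<Delta> J2 J4" using J24 by simp
  qed
  have IV: "\<forall>\<kappa>\<ge>0. ?Pm \<kappa> = Min (detvals B C (vertD m Dlo Dhi) (vertJ n alo ahi blo bhi) \<kappa>) \<and>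
        ?Pp \<kappa> = Max (detvals B C (vertD m Dlo Dhi) (vertJ n alo ahi blo bhi) \<kappa>)"
    using PE by blast
  show ?thesis unfolding Ds_def Js_def using I IIm IIp III IV by blast
qed

end
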